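(* Let $Z_1,\dots,Z_n$ be a sample drawn from a stationary $\beta$-mixing distribution with $\beta$-mixing coefficients $\beta(\cdot)$, with $Z_1\in[0,1]$ and $\mathrm{Var}[Z_1]=v<\infty$. Then for any $m,a,s\in\mathbb{N}_+$ with $m>1$, $n=2ma+s$ and $\delta>4(m-1)\beta(a)$, with probability at least $1-\delta$, \[\left|\mathbb{E}[Z_1]-\frac{1}{n}\sum_{i=1}^n Z_i\right|\le\varepsilon,\] where \[\varepsilon=\widetilde{\sigma}(a)\sqrt{\frac{4}{n}\log\left(\frac{4}{\delta-4(m-1)\beta(a)}\right)}+\frac{1}{3m}\log\left(\frac{4}{\delta-4(m-1)\beta(a)}\right)+\frac{s}{n},\qquad \widetilde{\sigma}(a)=\sqrt{v+\frac{2}{a}\sum_{k=1}^{a-1}(a-k)\beta(k)}.\]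
   Context: "$Z_1,\dots,Z_n$ is a sample drawn from a stationary $\beta$-mixing distribution" means $Z_1,\dots,Z_n$ are consecutive terms of a real-valued stationary process $\{Z_t\}_{t\in\mathbb{Z}}$ (finite-dimensional distributions invariant under time shifts) whose $\beta$-mixing coefficients $\beta(a)=\|\mathbb{P}_{-\infty:0,a:\infty}-\mathbb{P}_{-\infty:0}\otimes\mathbb{P}_{a:\infty}\|_{\mathrm{TV}}$ tend to $0$ as $a\to\infty$; here $\mathbb{P}_{-\infty:0,a:\infty}$ is the joint law of the blocks $(Z_{-\infty:0},Z_{a:\infty})$, $\mathbb{P}_{-\infty:0}$ and $\mathbb{P}_{a:\infty}$ are the laws of the individual blocks, and $\|\cdot\|_{\mathrm{TV}}$ is total variation distance. *)

theory Defs
  imports "HOL-Probability.Probability"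
begin

definition tv_dist :: "'b measure \<Rightarrow> 'b measure \<Rightarrow> real" where
  "tv_dist P Q = (SUP A \<in> sets P. \<bar>measure P A - measure Q A\<bar>)"

definition past_block :: "(int \<Rightarrow> 'a \<Rightarrow> real) \<Rightarrow> 'a \<Rightarrow> nat \<Rightarrow> real" where
  "past_block Z \<omega> = (\<lambda>k. Z (- int k) \<omega>)"

definition future_block :: "(int \<Rightarrow> 'a \<Rightarrow> real) \<Rightarrow> nat \<Rightarrow> 'a \<Rightarrow> nat \<Rightarrow> real" where
  "future_block Z a \<omega> = (\<lambda>k. Z (int a + int k) \<omega>)"

abbreviation seq_space :: "(nat \<Rightarrow> real) measure" where
  "seq_space \<equiv> Pi\<^sub>M UNIV (\<lambda>_. borel)"

definition beta_mix :: "'a measure \<Rightarrow> (int \<Rightarrow> 'a \<Rightarrow> real) \<Rightarrow> nat \<Rightarrow> real" where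
  "beta_mix M Z a =
     tv_dist (distr M (seq_space \<Otimes>\<^sub>M seq_space) (\<lambda>\<omega>. (past_block Z \<omega>, future_block Z a \<omega>)))
             (distr M seq_space (past_block Z) \<Otimes>\<^sub>M distr M seq_space (future_block Z a))"

definition stationary_process :: "'a measure \<Rightarrow> (int \<Rightarrow> 'a \<Rightarrow> real) \<Rightarrow> bool" where
  "stationary_process M Z \<longleftrightarrow>
     (\<forall>t. Z t \<in> borel_measurable M) \<and>
     (\<forall>J h. finite J \<longrightarrow>
        distr M (Pi\<^sub>M J (\<lambda>_. borel)) (\<lambda>\<omega>. restrict (\<lambda>t. Z (t + h) \<omega>) J)
      = distr M (Pi\<^sub>M J (\<lambda>_. borel)) (\<lambda>\<omega>. restrict (\<lambda>t. Z t \<omega>) J))"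

definition stationary_beta_mixing :: "'a measure \<Rightarrow> (int \<Rightarrow> 'a \<Rightarrow> real) \<Rightarrow> bool" where
  "stationary_beta_mixing M Z \<longleftrightarrow>
     stationary_process M Z \<and> (beta_mix M Z \<longlonglongrightarrow> 0)"

end

theory Submission
  imports Defs
begin

lemma tv_upper:
  assumes P: "prob_space P" and Q: "prob_space Q" and A: "A \<in> sets P"
  shows "measure P A - measure Q A \<le> tv_dist P Q"
proof -
  have b: "\<bar>measure P B - measure Q B\<bar> \<le> 1" for B
    using prob_space.prob_le_1[OF P, of B] prob_space.prob_le_1[OF Q, of B]
    using measure_nonneg[of P B] measure_nonneg[of Q B] by arith
  have "\<bar>measure P A - measure Q A\<bar> \<le> tv_dist P Q"
    unfolding tv_dist_def
    by (rule cSUP_upper[OF A]) (use b in \<open>auto intro!: bdd_aboveI\<close>)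
  then show ?thesis by simp
qed

lemma count_floor:
  fixes y :: real and N :: nat
  assumes "N \<ge> 1" "0 \<le> y" "y \<le> 1"
  shows "y - 1 / N \<le> (\<Sum>l\<in>{1..N}. if real l / N \<le> y then 1 else 0) / N"
    and "(\<Sum>l\<in>{1..N}. if real l / N \<le> y then 1 else 0) / N \<le> y"
proof -
  define K where "K = nat \<lfloor>N * y\<rfloor>"
  have Npos: "real N > 0" using assms by simp
  have Ny: "N * y \<le> N" using assms by (simp add: mult_left_le)
  have KN: "K \<le> N" unfolding K_def using Ny
    using floor_mono[OF Ny] by (simp add: nat_le_iff)
  have Kle: "real K \<le> N * y" unfolding K_def using assms
    by (simp add: of_nat_nat)
  have Kgt: "N * y < real K + 1" unfolding K_def using assms
    by (simp add: of_nat_nat)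
  have set: "{l\<in>{1..N}. real l / N \<le> y} = {1..K}"
  proof (intro set_eqI iffI)
    fix l assume "l \<in> {l\<in>{1..N}. real l / N \<le> y}"
    then have "l \<ge> 1" "real l \<le> N * y" using Npos by (auto simp: field_simps)
    then have "real l < real K + 1" using Kgt by linarith
    then show "l \<in> {1..K}" using \<open>l \<ge> 1\<close> by simp
  next
    fix l assume "l \<in> {1..K}"
    then have "l \<ge> 1" "l \<le> K" by auto
    then have "real l \<le> N * y" using Kle by linarith
    then show "l \<in> {l\<in>{1..N}. real l / N \<le> y}" using \<open>l \<ge> 1\<close> \<open>l \<le> K\<close> KN Npos
      by (auto simp: field_simps)
  qed
  have "(\<Sum>l\<in>{1..N}. if real l / N \<le> y then 1 else 0::real) = card {l\<in>{1..N}. real l / N \<le> y}"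
    by (simp add: sum.If_cases Int_def conj_commute)
  also have "\<dots> = K" using set by simp
  finally have S: "(\<Sum>l\<in>{1..N}. if real l / N \<le> y then 1 else 0::real) = K" .
  show "y - 1 / N \<le> (\<Sum>l\<in>{1..N}. if real l / N \<le> y then 1 else 0) / N"
    unfolding S
  proof -
    have "y - 1 / N = (N * y - 1) / N" using Npos by (simp add: field_simps)
    also have "\<dots> \<le> K / N" using Kgt Npos by (intro divide_right_mono) auto
    finally show "y - 1 / N \<le> K / N" .
  qed
  show "(\<Sum>l\<in>{1..N}. if real l / N \<le> y then 1 else 0) / N \<le> y"
    unfolding S using Kle Npos by (simp add: field_simps)
qed

lemma tv_fun:
  assumes P: "prob_space P" and Q: "prob_space Q" and sQ: "sets Q = sets P"
    and f: "f \<in> borel_measurable P" and f01: "\<And>x. 0 \<le> f x \<and> f x \<le> 1"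
  shows "(\<integral>x. f x \<partial>P) - (\<integral>x. f x \<partial>Q) \<le> tv_dist P Q"
proof -
  have spQ: "space Q = space P" using sQ by (rule sets_eq_imp_space_eq)
  have fQ: "f \<in> borel_measurable Q" using f sQ by (simp add: measurable_def spQ)
  have intP: "integrable P f"
    using f f01 by (intro finite_measure.integrable_const_bound[OF prob_space.finite_measure[OF P], of _ 1]) auto
  have intQ: "integrable Q f"
    using fQ f01 by (intro finite_measure.integrable_const_bound[OF prob_space.finite_measure[OF Q], of _ 1]) auto
  have key: "(\<integral>x. f x \<partial>P) \<le> (\<integral>x. f x \<partial>Q) + tv_dist P Q + 1 / N" if N: "N \<ge> 1" for N :: nat
  proof -
    define A where "A l = {x\<in>space P. real l / N \<le> f x}" for l :: nat
    have AP: "A l \<in> sets P" for l unfolding A_def using f by measurable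
    have AQ: "A l \<in> sets Q" for l using AP sQ by simp
    define g where "g x = (\<Sum>l\<in>{1..N}. indicator (A l) x) / real N" for x
    have gx: "g x = (\<Sum>l\<in>{1..N}. if real l / N \<le> f x then 1 else 0) / N" if "x \<in> space P" for x
      unfolding g_def A_def by (intro arg_cong[where f="\<lambda>z. z / real N"] sum.cong) (auto simp: indicator_def that)
    have g1: "f x - 1 / N \<le> g x" "g x \<le> f x" if "x \<in> space P" for x
      using count_floor[OF N, of "f x"] f01[of x] gx[OF that] by auto
    have intgP: "integrable P g" unfolding g_def
      using AP finite_measure.emeasure_finite[OF prob_space.finite_measure[OF P]]
      by (intro integrable_divide integrable_sum integrable_real_indicator) (auto simp: top.not_eq_extremum)
    have intgQ: "integrable Q g" unfolding g_def
      using AQ finite_measure.emeasure_finite[OF prob_space.finite_measure[OF Q]]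
      by (intro integrable_divide integrable_sum integrable_real_indicator) (auto simp: top.not_eq_extremum)
    have IgP: "(\<integral>x. g x \<partial>P) = (\<Sum>l\<in>{1..N}. measure P (A l)) / N"
      unfolding g_def using AP finite_measure.emeasure_finite[OF prob_space.finite_measure[OF P]]
      by (simp add: top.not_eq_extremum sets.Int_space_eq2)
    have IgQ: "(\<integral>x. g x \<partial>Q) = (\<Sum>l\<in>{1..N}. measure Q (A l)) / N"
      unfolding g_def using AQ finite_measure.emeasure_finite[OF prob_space.finite_measure[OF Q]]
      by (simp add: top.not_eq_extremum sets.Int_space_eq2)
    have "(\<integral>x. f x \<partial>P) \<le> (\<integral>x. g x + 1 / N \<partial>P)"
      using g1(1) by (intro integral_mono intP Bochner_Integration.integrable_add intgP finite_measure.integrable_const[OF prob_space.finite_measure[OF P]]) force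
    also have "\<dots> = (\<integral>x. g x \<partial>P) + 1 / N"
      using intgP prob_space.prob_space[OF P] finite_measure.integrable_const[OF prob_space.finite_measure[OF P]]
      by (subst Bochner_Integration.integral_add) auto
    also have "(\<integral>x. g x \<partial>P) \<le> (\<integral>x. g x \<partial>Q) + tv_dist P Q"
    proof -
      have "(\<Sum>l\<in>{1..N}. measure P (A l)) \<le> (\<Sum>l\<in>{1..N}. measure Q (A l) + tv_dist P Q)"
        using tv_upper[OF P Q AP] by (intro sum_mono) (simp add: algebra_simps)
      also have "\<dots> = (\<Sum>l\<in>{1..N}. measure Q (A l)) + N * tv_dist P Q" by (simp add: sum.distrib)
      finally show ?thesis unfolding IgP IgQ using N by (simp add: field_simps)
    qed
    also have "(\<integral>x. g x \<partial>Q) \<le> (\<integral>x. f x \<partial>Q)"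
      using g1 intQ intgQ spQ by (intro integral_mono) auto
    finally show ?thesis by simp
  qed
  show ?thesis
  proof (rule ccontr)
    assume "\<not> ?thesis"
    then have d: "(\<integral>x. f x \<partial>P) - (\<integral>x. f x \<partial>Q) - tv_dist P Q > 0" by simp
    then obtain N :: nat where N: "1 / real (Suc N) < (\<integral>x. f x \<partial>P) - (\<integral>x. f x \<partial>Q) - tv_dist P Q"
      using nat_approx_posE by blast
    from key[of "Suc N"] N show False by simp
  qed
qed

lemma stat_meas:
  assumes "stationary_process M Z" shows "Z t \<in> borel_measurable M"
  using assms unfolding stationary_process_def by auto

lemma stat_distr:
  assumes st: "stationary_process M Z" and K: "finite K"
    and \<Phi>: "\<Phi> \<in> borel_measurable (Pi\<^sub>M K (\<lambda>_. borel))"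
  shows "distr M borel (\<lambda>\<omega>. \<Phi> (\<lambda>i\<in>K. Z (idx i + h) \<omega>)) = distr M borel (\<lambda>\<omega>. \<Phi> (\<lambda>i\<in>K. Z (idx i) \<omega>))"
proof -
  define J where "J = idx ` K"
  have J: "finite J" unfolding J_def using K by simp
  define G where "G x = \<Phi> (\<lambda>i\<in>K. x (idx i))" for x :: "int \<Rightarrow> real"
  have G: "G \<in> borel_measurable (Pi\<^sub>M J (\<lambda>_. borel))"
    unfolding G_def
    by (rule measurable_compose[OF _ \<Phi>], rule measurable_restrict)
       (auto simp: J_def intro!: measurable_component_singleton)
  have Zm: "\<And>t. Z t \<in> borel_measurable M" using st stat_meas by blast
  have R: "(\<lambda>\<omega>. restrict (\<lambda>t. Z (t + h') \<omega>) J) \<in> measurable M (Pi\<^sub>M J (\<lambda>_. borel))" for h'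
    by (rule measurable_restrict) (use Zm in auto)
  have eq: "distr M (Pi\<^sub>M J (\<lambda>_. borel)) (\<lambda>\<omega>. restrict (\<lambda>t. Z (t + h) \<omega>) J)
      = distr M (Pi\<^sub>M J (\<lambda>_. borel)) (\<lambda>\<omega>. restrict (\<lambda>t. Z t \<omega>) J)"
    using st J unfolding stationary_process_def by blast
  have R0: "(\<lambda>\<omega>. restrict (\<lambda>t. Z t \<omega>) J) \<in> measurable M (Pi\<^sub>M J (\<lambda>_. borel))"
    using R[of 0] by simp
  have e1: "(\<lambda>\<omega>. \<Phi> (\<lambda>i\<in>K. Z (idx i + h) \<omega>)) = (\<lambda>\<omega>. G (restrict (\<lambda>t. Z (t + h) \<omega>) J))"
    unfolding G_def J_def by (rule ext, rule arg_cong[where f=\<Phi>]) (auto simp: restrict_def)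
  have e2: "(\<lambda>\<omega>. \<Phi> (\<lambda>i\<in>K. Z (idx i) \<omega>)) = (\<lambda>\<omega>. G (restrict (\<lambda>t. Z t \<omega>) J))"
    unfolding G_def J_def by (rule ext, rule arg_cong[where f=\<Phi>]) (auto simp: restrict_def)
  show ?thesis
    unfolding e1 e2
    using distr_distr[OF G R[of h], symmetric] distr_distr[OF G R0, symmetric] eq
    by (simp add: comp_def)
qed

lemma distr_eq_measure:
  assumes "distr M borel F1 = distr M borel F2" "F1 \<in> borel_measurable M" "F2 \<in> borel_measurable M"
    and "B \<in> sets borel"
  shows "measure M {\<omega>\<in>space M. F1 \<omega> \<in> B} = measure M {\<omega>\<in>space M. F2 \<omega> \<in> B}"
proof -
  have "measure M {\<omega>\<in>space M. F1 \<omega> \<in> B} = measure (distr M borel F1) B"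
    using assms by (subst measure_distr) (auto simp: vimage_def Int_def conj_commute)
  also have "\<dots> = measure (distr M borel F2) B" using assms by simp
  also have "\<dots> = measure M {\<omega>\<in>space M. F2 \<omega> \<in> B}"
    using assms by (subst measure_distr) (auto simp: vimage_def Int_def conj_commute)
  finally show ?thesis .
qed

lemma distr_eq_integral:
  fixes F1 F2 :: "_ \<Rightarrow> real"
  assumes "distr M borel F1 = distr M borel F2" "F1 \<in> borel_measurable M" "F2 \<in> borel_measurable M"
  shows "(\<integral>\<omega>. F1 \<omega> \<partial>M) = (\<integral>\<omega>. F2 \<omega> \<partial>M)"
proof -
  have "(\<integral>\<omega>. F1 \<omega> \<partial>M) = (\<integral>x. x \<partial>distr M borel F1)"
    using integral_distr[OF assms(2), of "\<lambda>x. x"] by simp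
  also have "\<dots> = (\<integral>x. x \<partial>distr M borel F2)" using assms by simp
  also have "\<dots> = (\<integral>\<omega>. F2 \<omega> \<partial>M)"
    using integral_distr[OF assms(3), of "\<lambda>x. x"] by simp
  finally show ?thesis .
qed

lemma bounded_integrable:
  fixes f :: "_ \<Rightarrow> real"
  assumes "prob_space M" "f \<in> borel_measurable M" "\<And>x. x \<in> space M \<Longrightarrow> \<bar>f x\<bar> \<le> B"
  shows "integrable M f"
  using assms by (intro finite_measure.integrable_const_bound[OF prob_space.finite_measure[OF assms(1)], of _ B]) auto

definition Wb :: "(int \<Rightarrow> 'a \<Rightarrow> real) \<Rightarrow> nat \<Rightarrow> int \<Rightarrow> nat \<Rightarrow> 'a \<Rightarrow> real" where
  "Wb Z a p j \<omega> = (\<Sum>i<a. Z (p + int (2*j*a + i)) \<omega>)"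

lemma past_meas:
  assumes "\<And>t. Z t \<in> borel_measurable M"
  shows "past_block Z \<in> measurable M seq_space"
  unfolding past_block_def
  by (rule measurable_PiM_single') (use assms in auto)

lemma future_meas:
  assumes "\<And>t. Z t \<in> borel_measurable M"
  shows "future_block Z a \<in> measurable M seq_space"
  unfolding future_block_def
  by (rule measurable_PiM_single') (use assms in auto)

lemma Wb_meas:
  assumes "\<And>t. Z t \<in> borel_measurable M"
  shows "Wb Z a p j \<in> borel_measurable M"
  unfolding Wb_def[abs_def] using assms by measurable

lemma Wb_bounds:
  assumes "\<And>t \<omega>. 0 \<le> Z t \<omega> \<and> Z t \<omega> \<le> 1"
  shows "0 \<le> Wb Z a p j \<omega>" "Wb Z a p j \<omega> \<le> a"
proof -
  show "0 \<le> Wb Z a p j \<omega>" unfolding Wb_def using assms by (intro sum_nonneg) auto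
  have "Wb Z a p j \<omega> \<le> (\<Sum>i<a. 1)" unfolding Wb_def using assms by (intro sum_mono) auto
  then show "Wb Z a p j \<omega> \<le> a" by simp
qed

lemma exp_Wb_int:
  assumes P: "prob_space M" and Zm: "\<And>t. Z t \<in> borel_measurable M"
    and b: "\<And>t \<omega>. 0 \<le> Z t \<omega> \<and> Z t \<omega> \<le> 1"
  shows "integrable M (\<lambda>\<omega>. exp (c * Wb Z a p j \<omega>))"
proof (rule bounded_integrable[OF P, where B="exp (\<bar>c\<bar> * a)"])
  show "(\<lambda>\<omega>. exp (c * Wb Z a p j \<omega>)) \<in> borel_measurable M"
    using Wb_meas[OF Zm] by measurable
  fix \<omega>
  have "c * Wb Z a p j \<omega> \<le> \<bar>c\<bar> * Wb Z a p j \<omega>"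
    using Wb_bounds[where Z=Z, OF b] by (simp add: mult_right_mono)
  also have "\<dots> \<le> \<bar>c\<bar> * a" using Wb_bounds[where Z=Z, OF b] by (simp add: mult_left_mono)
  finally show "\<bar>exp (c * Wb Z a p j \<omega>)\<bar> \<le> exp (\<bar>c\<bar> * a)" by simp
qed

lemma W_law:
  assumes st: "stationary_process M Z"
  shows "(\<integral>\<omega>. exp (c * Wb Z a p 0 \<omega>) \<partial>M) = (\<integral>\<omega>. exp (c * Wb Z a 0 0 \<omega>) \<partial>M)"
proof -
  have Zm[measurable]: "\<And>t. Z t \<in> borel_measurable M" using st stat_meas by blast
  have \<Phi>: "(\<lambda>x. exp (c * (\<Sum>i<a. x i))) \<in> borel_measurable (Pi\<^sub>M {..<a} (\<lambda>_. borel))"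
    by measurable
  have D: "distr M borel (\<lambda>\<omega>. (\<lambda>x. exp (c * (\<Sum>i<a. x i))) (\<lambda>i\<in>{..<a}. Z (int i + p) \<omega>))
    = distr M borel (\<lambda>\<omega>. (\<lambda>x. exp (c * (\<Sum>i<a. x i))) (\<lambda>i\<in>{..<a}. Z (int i) \<omega>))"
    by (rule stat_distr[OF st _ \<Phi>]) auto
  have e1: "(\<lambda>\<omega>. (\<lambda>x. exp (c * (\<Sum>i<a. x i))) (\<lambda>i\<in>{..<a}. Z (int i + p) \<omega>)) = (\<lambda>\<omega>. exp (c * Wb Z a p 0 \<omega>))"
    unfolding Wb_def by (auto simp: add.commute)
  have e2: "(\<lambda>\<omega>. (\<lambda>x. exp (c * (\<Sum>i<a. x i))) (\<lambda>i\<in>{..<a}. Z (int i) \<omega>)) = (\<lambda>\<omega>. exp (c * Wb Z a 0 0 \<omega>))"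
    unfolding Wb_def by auto
  have Wm[measurable]: "\<And>p j. Wb Z a p j \<in> borel_measurable M" using Wb_meas[where Z=Z, OF Zm] by blast
  show ?thesis
    by (rule distr_eq_integral[OF D[unfolded e1 e2]]) measurable
qed

lemma exp_markov:
  fixes X :: "'a \<Rightarrow> real"
  assumes P: "prob_space M" and X: "X \<in> borel_measurable M" and I: "integrable M (\<lambda>\<omega>. exp (X \<omega>))"
  shows "measure M {\<omega>\<in>space M. X \<omega> \<ge> r} \<le> exp (-r) * (\<integral>\<omega>. exp (X \<omega>) \<partial>M)"
proof -
  have S: "{\<omega>\<in>space M. X \<omega> \<ge> r} \<in> sets M" using X by measurable
  have "measure M {\<omega>\<in>space M. X \<omega> \<ge> r} = (\<integral>\<omega>. indicator {\<omega>\<in>space M. X \<omega> \<ge> r} \<omega> \<partial>M)"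
    using S by (simp add: sets.Int_space_eq2)
  also have "\<dots> \<le> (\<integral>\<omega>. exp (-r) * exp (X \<omega>) \<partial>M)"
  proof (rule integral_mono)
    show "integrable M (indicat_real {\<omega> \<in> space M. r \<le> X \<omega>})"
      using S finite_measure.emeasure_finite[OF prob_space.finite_measure[OF P]]
      by (intro integrable_real_indicator) (auto simp: top.not_eq_extremum)
    show "integrable M (\<lambda>\<omega>. exp (- r) * exp (X \<omega>))" using I by simp
    fix \<omega> assume "\<omega> \<in> space M"
    show "indicat_real {\<omega> \<in> space M. r \<le> X \<omega>} \<omega> \<le> exp (- r) * exp (X \<omega>)"
    proof (cases "r \<le> X \<omega>")
      case True
      then have "1 \<le> exp (X \<omega> - r)" by simp
      then show ?thesis using True \<open>\<omega> \<in> space M\<close> by (simp add: exp_diff exp_minus field_simps)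
    qed (auto simp: indicator_def)
  qed
  also have "\<dots> = exp (-r) * (\<integral>\<omega>. exp (X \<omega>) \<partial>M)" by simp
  finally show ?thesis .
qed

lemma block_step:
  fixes Z :: "int \<Rightarrow> 'a \<Rightarrow> real"
  assumes P: "prob_space M" and st: "stationary_process M Z"
    and b: "\<And>t \<omega>. 0 \<le> Z t \<omega> \<and> Z t \<omega> \<le> 1" and a: "a > 0" and k: "k \<ge> 1"
    and psi: "\<psi> = (\<integral>\<omega>. exp (c * Wb Z a 0 0 \<omega>) \<partial>M)"
    and IH: "\<And>p r. measure M {\<omega>\<in>space M. (\<Sum>j<k. c * Wb Z a p j \<omega>) \<ge> r}
               \<le> exp (-r) * \<psi>^k + (real k - 1) * beta_mix M Z a"
  shows "measure M {\<omega>\<in>space M. (\<Sum>j<Suc k. c * Wb Z a p j \<omega>) \<ge> r}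
           \<le> exp (-r) * \<psi>^(Suc k) + (real (Suc k) - 1) * beta_mix M Z a"
proof -
  have Zm[measurable]: "\<And>t. Z t \<in> borel_measurable M" using st stat_meas by blast
  have Wm[measurable]: "\<And>p j. Wb Z a p j \<in> borel_measurable M" using Wb_meas[where Z=Z, OF Zm] by blast
  have pm[measurable]: "past_block Z \<in> measurable M seq_space" using past_meas[where Z=Z, OF Zm] by blast
  have fm[measurable]: "future_block Z a \<in> measurable M seq_space" using future_meas[where Z=Z, OF Zm] by blast
  define h :: int where "h = p + int (2*k*a) - int a - 1"
  define S where "S \<omega> = (\<Sum>j<Suc k. c * Wb Z a p j \<omega>)" for \<omega>
  define S' where "S' \<omega> = (\<Sum>j<Suc k. c * Wb Z a (p - h) j \<omega>)" for \<omega>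
  define K where "K = {..<Suc k} \<times> {..<a}"
  define idx where "idx q = p - h + int (2 * fst q * a + snd q)" for q :: "nat \<times> nat"
  define \<Phi> where "\<Phi> x = (\<Sum>q\<in>K. c * x q)" for x :: "nat \<times> nat \<Rightarrow> real"
  have \<Phi>m: "\<Phi> \<in> borel_measurable (Pi\<^sub>M K (\<lambda>_. borel))"
    unfolding \<Phi>_def[abs_def] by measurable
  have sumK: "(\<Sum>j<Suc k. c * (\<Sum>i<a. g j i)) = (\<Sum>q\<in>K. c * g (fst q) (snd q))" for g :: "nat \<Rightarrow> nat \<Rightarrow> real"
    unfolding K_def by (simp add: sum_distrib_left sum.cartesian_product case_prod_beta)
  have eS: "(\<lambda>\<omega>. \<Phi> (\<lambda>q\<in>K. Z (idx q + h) \<omega>)) = S"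
  proof
    fix \<omega>
    have "\<Phi> (\<lambda>q\<in>K. Z (idx q + h) \<omega>) = (\<Sum>q\<in>K. c * Z (idx q + h) \<omega>)"
      unfolding \<Phi>_def by (intro sum.cong) auto
    also have "\<dots> = S \<omega>" unfolding S_def Wb_def sumK idx_def by (intro sum.cong) (auto simp: algebra_simps)
    finally show "\<Phi> (\<lambda>q\<in>K. Z (idx q + h) \<omega>) = S \<omega>" .
  qed
  have eS': "(\<lambda>\<omega>. \<Phi> (\<lambda>q\<in>K. Z (idx q) \<omega>)) = S'"
  proof
    fix \<omega>
    have "\<Phi> (\<lambda>q\<in>K. Z (idx q) \<omega>) = (\<Sum>q\<in>K. c * Z (idx q) \<omega>)"
      unfolding \<Phi>_def by (intro sum.cong) auto
    also have "\<dots> = S' \<omega>" unfolding S'_def Wb_def sumK idx_def by (intro sum.cong) (auto simp: algebra_simps)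
    finally show "\<Phi> (\<lambda>q\<in>K. Z (idx q) \<omega>) = S' \<omega>" .
  qed
  have Sm[measurable]: "S \<in> borel_measurable M" unfolding S_def[abs_def] by measurable
  have S'm[measurable]: "S' \<in> borel_measurable M" unfolding S'_def[abs_def] by measurable
  have step1: "measure M {\<omega>\<in>space M. S \<omega> \<ge> r} = measure M {\<omega>\<in>space M. S' \<omega> \<ge> r}"
  proof -
    have D: "distr M borel S = distr M borel S'"
      using stat_distr[OF st _ \<Phi>m, of idx h] unfolding eS eS' by (simp add: K_def)
    show ?thesis using distr_eq_measure[OF D Sm S'm, of "{r..}"] by simp
  qed
  define pastF where "pastF x = (\<Sum>j<k. c * (\<Sum>i<a. x (2*k*a - a - 1 - 2*j*a - i)))" for x :: "nat \<Rightarrow> real"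
  define futF where "futF y = c * (\<Sum>i<a. y (Suc i))" for y :: "nat \<Rightarrow> real"
  have pastFm[measurable]: "pastF \<in> borel_measurable seq_space" unfolding pastF_def[abs_def] by measurable
  have futFm[measurable]: "futF \<in> borel_measurable seq_space" unfolding futF_def[abs_def] by measurable
  have past_eq: "pastF (past_block Z \<omega>) = (\<Sum>j<k. c * Wb Z a (p - h) j \<omega>)" for \<omega>
    unfolding pastF_def Wb_def past_block_def
  proof (intro sum.cong refl arg_cong[where f="\<lambda>z. c * z"])
    fix j i assume j: "j \<in> {..<k}" and i: "i \<in> {..<a}"
    have le: "2*j*a + i + a + 1 \<le> 2*k*a"
    proof -
      from j have "j + 1 \<le> k" by simp
      then have "2*(j+1)*a \<le> 2*k*a" by (intro mult_right_mono) auto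
      then show ?thesis using i by (simp add: algebra_simps)
    qed
    have "- int (2*k*a - a - 1 - 2*j*a - i) = p - h + int (2*j*a + i)"
      using le unfolding h_def by (simp add: of_nat_diff algebra_simps)
    then show "Z (- int (2*k*a - a - 1 - 2*j*a - i)) \<omega> = Z (p - h + int (2*j*a + i)) \<omega>" by simp
  qed
  have fut_eq: "futF (future_block Z a \<omega>) = c * Wb Z a (p - h) k \<omega>" for \<omega>
    unfolding futF_def Wb_def future_block_def
    by (intro sum.cong refl arg_cong[where f="\<lambda>z. c * z"] arg_cong[where f="\<lambda>t. Z t \<omega>"])
       (simp add: h_def algebra_simps)
  have fut_eq2: "futF (future_block Z a \<omega>) = c * Wb Z a (int a + 1) 0 \<omega>" for \<omega>
    unfolding futF_def Wb_def future_block_def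
    by (intro sum.cong refl arg_cong[where f="\<lambda>z. c * z"] arg_cong[where f="\<lambda>t. Z t \<omega>"])
       (simp add: algebra_simps)
  have S'_eq: "S' \<omega> = pastF (past_block Z \<omega>) + futF (future_block Z a \<omega>)" for \<omega>
    unfolding S'_def past_eq fut_eq by simp
  define Pj where "Pj = distr M (seq_space \<Otimes>\<^sub>M seq_space) (\<lambda>\<omega>. (past_block Z \<omega>, future_block Z a \<omega>))"
  define Pp where "Pp = distr M seq_space (past_block Z)"
  define Pf where "Pf = distr M seq_space (future_block Z a)"
  have pairm: "(\<lambda>\<omega>. (past_block Z \<omega>, future_block Z a \<omega>)) \<in> measurable M (seq_space \<Otimes>\<^sub>M seq_space)"
    by measurable
  have PPp: "prob_space Pp" unfolding Pp_def using prob_space.prob_space_distr[OF P pm] .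
  have PPf: "prob_space Pf" unfolding Pf_def using prob_space.prob_space_distr[OF P fm] .
  have PPj: "prob_space Pj" unfolding Pj_def using prob_space.prob_space_distr[OF P pairm] .
  have PPq: "prob_space (Pp \<Otimes>\<^sub>M Pf)" using prob_space_pair[OF PPp PPf] .
  define A where "A = {z\<in>space (seq_space \<Otimes>\<^sub>M seq_space). pastF (fst z) + futF (snd z) \<ge> r}"
  have Am: "A \<in> sets (seq_space \<Otimes>\<^sub>M seq_space)" unfolding A_def by measurable
  have step2: "measure M {\<omega>\<in>space M. S' \<omega> \<ge> r} = measure Pj A"
    unfolding Pj_def using Am pairm measurable_space[OF pm] measurable_space[OF fm]
    by (subst measure_distr) (auto simp: A_def S'_eq space_pair_measure intro!: arg_cong[where f="measure M"])
  have step3: "measure Pj A \<le> measure (Pp \<Otimes>\<^sub>M Pf) A + beta_mix M Z a"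
  proof -
    have "measure Pj A - measure (Pp \<Otimes>\<^sub>M Pf) A \<le> tv_dist Pj (Pp \<Otimes>\<^sub>M Pf)"
      by (rule tv_upper[OF PPj PPq]) (use Am in \<open>simp add: Pj_def\<close>)
    then show ?thesis unfolding beta_mix_def Pj_def Pp_def Pf_def by simp
  qed
  interpret PS: pair_sigma_finite Pp Pf
    using PPp PPf by (simp add: pair_sigma_finite_def prob_space_imp_sigma_finite)
  have spPp: "space Pp = space seq_space" unfolding Pp_def by simp
  have spPf: "space Pf = space seq_space" unfolding Pf_def by simp
  have sPq: "sets (Pp \<Otimes>\<^sub>M Pf) = sets (seq_space \<Otimes>\<^sub>M seq_space)"
    unfolding Pp_def Pf_def by (intro sets_pair_measure_cong) auto
  have Aq: "A \<in> sets (Pp \<Otimes>\<^sub>M Pf)" using Am sPq by simp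
  have intA: "integrable (Pp \<Otimes>\<^sub>M Pf) (\<lambda>z. indicator A z :: real)"
    using Aq finite_measure.emeasure_finite[OF prob_space.finite_measure[OF PPq]]
    by (intro integrable_real_indicator) (auto simp: top.not_eq_extremum)
  have fub: "measure (Pp \<Otimes>\<^sub>M Pf) A = (\<integral>y. (\<integral>x. indicator A (x, y) \<partial>Pp) \<partial>Pf)"
  proof -
    have "measure (Pp \<Otimes>\<^sub>M Pf) A = integral\<^sup>L (Pp \<Otimes>\<^sub>M Pf) (indicator A)"
      using Aq by (simp add: sets.Int_space_eq2)
    also have "\<dots> = (\<integral>y. (\<integral>x. indicator A (x, y) \<partial>Pp) \<partial>Pf)"
      using PS.integral_snd[of "\<lambda>x y. indicator A (x, y) :: real"] intA by simp
    finally show ?thesis .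
  qed
  have intin: "integrable Pf (\<lambda>y. (\<integral>x. indicator A (x, y) \<partial>Pp) :: real)"
    using PS.integrable_snd[of "\<lambda>x y. indicator A (x, y) :: real"] intA by simp
  define \<beta> where "\<beta> = beta_mix M Z a"
  have inner: "(\<integral>x. indicator A (x, y) \<partial>Pp) \<le> exp (-r) * \<psi>^k * exp (futF y) + (real k - 1) * \<beta>"
    if y: "y \<in> space Pf" for y
  proof -
    define B where "B = {x\<in>space seq_space. pastF x \<ge> r - futF y}"
    have Bm: "B \<in> sets seq_space" unfolding B_def by measurable
    have "(\<integral>x. indicator A (x, y) \<partial>Pp) = (\<integral>x. indicator B x \<partial>Pp)"
      using y spPf spPp
      by (intro Bochner_Integration.integral_cong refl) (auto simp: A_def B_def indicator_def space_pair_measure)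
    also have "\<dots> = measure Pp B" using Bm by (simp add: Pp_def sets.Int_space_eq2)
    also have "\<dots> = measure M {\<omega>\<in>space M. (\<Sum>j<k. c * Wb Z a (p - h) j \<omega>) \<ge> r - futF y}"
      unfolding Pp_def using Bm measurable_space[OF pm]
      by (subst measure_distr[OF pm]) (auto simp: B_def past_eq[symmetric] intro!: arg_cong[where f="measure M"])
    also have "\<dots> \<le> exp (-(r - futF y)) * \<psi>^k + (real k - 1) * \<beta>"
      using IH unfolding \<beta>_def by blast
    also have "exp (-(r - futF y)) = exp (-r) * exp (futF y)" by (simp add: exp_add[symmetric])
    finally show ?thesis by (simp add: mult_ac)
  qed
  have intF: "integrable Pf (\<lambda>y. exp (futF y))"
    unfolding Pf_def
    by (subst integrable_distr_eq[OF fm]) (auto simp: fut_eq2 intro!: exp_Wb_int[OF P Zm b])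
  have IF: "(\<integral>y. exp (futF y) \<partial>Pf) = \<psi>"
  proof -
    have "(\<integral>y. exp (futF y) \<partial>Pf) = (\<integral>\<omega>. exp (futF (future_block Z a \<omega>)) \<partial>M)"
      unfolding Pf_def by (rule integral_distr[OF fm]) measurable
    also have "\<dots> = (\<integral>\<omega>. exp (c * Wb Z a (int a + 1) 0 \<omega>) \<partial>M)" by (simp add: fut_eq2)
    also have "\<dots> = \<psi>" unfolding psi using W_law[OF st] by blast
    finally show ?thesis .
  qed
  have "measure (Pp \<Otimes>\<^sub>M Pf) A \<le> (\<integral>y. exp (-r) * \<psi>^k * exp (futF y) + (real k - 1) * \<beta> \<partial>Pf)"
    unfolding fub using inner intin intF PPf
    by (intro integral_mono) (auto intro!: Bochner_Integration.integrable_add finite_measure.integrable_const prob_space.finite_measure)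
  also have "\<dots> = exp (-r) * \<psi>^k * \<psi> + (real k - 1) * \<beta>"
    using intF PPf IF finite_measure.integrable_const[OF prob_space.finite_measure[OF PPf]]
    by (subst Bochner_Integration.integral_add) (auto simp: prob_space.prob_space)
  finally have "measure (Pp \<Otimes>\<^sub>M Pf) A \<le> exp (-r) * \<psi>^k * \<psi> + (real k - 1) * \<beta>" .
  then show ?thesis
    using step1 step2 step3 unfolding S_def \<beta>_def by (simp add: algebra_simps)
qed

lemma blocking:
  fixes Z :: "int \<Rightarrow> 'a \<Rightarrow> real"
  assumes P: "prob_space M" and st: "stationary_process M Z"
    and b: "\<And>t \<omega>. 0 \<le> Z t \<omega> \<and> Z t \<omega> \<le> 1" and a: "a > 0" and k: "k \<ge> 1"
  shows "measure M {\<omega>\<in>space M. (\<Sum>j<k. c * Wb Z a p j \<omega>) \<ge> r}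
           \<le> exp (-r) * (\<integral>\<omega>. exp (c * Wb Z a 0 0 \<omega>) \<partial>M)^k + (real k - 1) * beta_mix M Z a"
  using k
proof (induction k arbitrary: p r)
  case 0 then show ?case by simp
next
  case (Suc k)
  have Zm[measurable]: "\<And>t. Z t \<in> borel_measurable M" using st stat_meas by blast
  have Wm[measurable]: "\<And>p j. Wb Z a p j \<in> borel_measurable M" using Wb_meas[where Z=Z, OF Zm] by blast
  show ?case
  proof (cases "k = 0")
    case True
    have "measure M {\<omega>\<in>space M. c * Wb Z a p 0 \<omega> \<ge> r} \<le> exp (-r) * (\<integral>\<omega>. exp (c * Wb Z a p 0 \<omega>) \<partial>M)"
      by (rule exp_markov[OF P]) (auto intro!: exp_Wb_int[OF P Zm b])
    then show ?thesis using True W_law[OF st, of c a p] by simp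
  next
    case False
    then have k1: "k \<ge> 1" by simp
    show ?thesis
      by (rule block_step[OF P st b a k1 refl]) (use Suc.IH[OF k1] in blast)
  qed
qed

lemma exp_ineq:
  fixes x l :: real
  assumes x: "\<bar>x\<bar> \<le> 1" and l: "l \<ge> 0"
  shows "exp (l * x) \<le> 1 + l * x + x^2 * (exp l - 1 - l)"
proof -
  have s1: "summable (\<lambda>n. inverse (fact (n + 2)) * (l * x) ^ (n + 2))"
    using summable_ignore_initial_segment[OF summable_exp[of "l * x"], of 2] by simp
  have s2: "summable (\<lambda>n. inverse (fact (n + 2)) * l ^ (n + 2))"
    using summable_ignore_initial_segment[OF summable_exp[of l], of 2] by simp
  have e1: "exp (l * x) = 1 + l * x + (\<Sum>n. inverse (fact (n + 2)) * (l * x) ^ (n + 2))"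
    using exp_first_two_terms[of "l * x"] by simp
  have e2: "exp l - 1 - l = (\<Sum>n. inverse (fact (n + 2)) * l ^ (n + 2))"
    using exp_first_two_terms[of l] by simp
  have "(\<Sum>n. inverse (fact (n + 2)) * (l * x) ^ (n + 2)) \<le> (\<Sum>n. x^2 * (inverse (fact (n + 2)) * l ^ (n + 2)))"
  proof (rule suminf_le)
    fix n
    have "\<bar>x\<bar> ^ n \<le> 1" by (rule power_le_one) (use x in auto)
    then have xn: "x ^ n \<le> 1" by (metis abs_ge_self order_trans power_abs)
    have "(l * x) ^ (n + 2) = (l ^ (n+2) * x^2) * x ^ n" by (simp add: power_mult_distrib power_add power2_eq_square)
    also have "\<dots> \<le> (l ^ (n+2) * x^2) * 1" using xn l by (intro mult_left_mono) auto
    finally have "(l * x) ^ (n + 2) \<le> l ^ (n+2) * x^2" by simp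
    then have "inverse (fact (n + 2)) * (l * x) ^ (n + 2) \<le> inverse (fact (n + 2)) * (l ^ (n+2) * x^2)"
      by (rule mult_left_mono) simp
    also have "\<dots> = x^2 * (inverse (fact (n + 2)) * l ^ (n + 2))" by (simp only: ac_simps)
    finally show "inverse (fact (n + 2)) * (l * x) ^ (n + 2) \<le> x^2 * (inverse (fact (n + 2)) * l ^ (n + 2))" .
  qed (use s1 s2 summable_mult in auto)
  also have "\<dots> = x^2 * (exp l - 1 - l)" unfolding e2 by (rule suminf_mult[OF s2])
  finally show ?thesis unfolding e1 by simp
qed

lemma mgf_bound:
  fixes Y :: "'a \<Rightarrow> real"
  assumes P: "prob_space M" and Ym: "Y \<in> borel_measurable M"
    and Yb: "\<And>\<omega>. \<bar>Y \<omega>\<bar> \<le> 1" and Y0: "(\<integral>\<omega>. Y \<omega> \<partial>M) = 0" and l: "l \<ge> 0"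
  shows "(\<integral>\<omega>. exp (l * Y \<omega>) \<partial>M) \<le> exp ((\<integral>\<omega>. (Y \<omega>)^2 \<partial>M) * (exp l - 1 - l))"
proof -
  define C where "C = exp l - 1 - l"
  have IY: "integrable M Y" using bounded_integrable[OF P Ym, of 1] Yb by auto
  have IY2: "integrable M (\<lambda>\<omega>. (Y \<omega>)^2)"
    using bounded_integrable[OF P _, of "\<lambda>\<omega>. (Y \<omega>)^2" 1] Yb Ym
    by (auto simp: abs_square_le_1)
  have IE: "integrable M (\<lambda>\<omega>. exp (l * Y \<omega>))"
    using bounded_integrable[OF P _, of "\<lambda>\<omega>. exp (l * Y \<omega>)" "exp l"] Yb Ym l
    by (auto simp: abs_le_iff mult_left_le)
  have IC: "integrable M (\<lambda>\<omega>. c)" for c :: real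
    using finite_measure.integrable_const[OF prob_space.finite_measure[OF P]] .
  have "(\<integral>\<omega>. exp (l * Y \<omega>) \<partial>M) \<le> (\<integral>\<omega>. 1 + l * Y \<omega> + (Y \<omega>)^2 * C \<partial>M)"
    using exp_ineq[OF Yb l] IE IY IY2 IC unfolding C_def
    by (intro integral_mono) (auto intro!: Bochner_Integration.integrable_add)
  also have "\<dots> = 1 + l * (\<integral>\<omega>. Y \<omega> \<partial>M) + (\<integral>\<omega>. (Y \<omega>)^2 \<partial>M) * C"
    using IY IY2 IC prob_space.prob_space[OF P]
    by (simp add: Bochner_Integration.integral_add Bochner_Integration.integrable_add)
  also have "\<dots> = 1 + (\<integral>\<omega>. (Y \<omega>)^2 \<partial>M) * C" using Y0 by simp
  also have "\<dots> \<le> exp ((\<integral>\<omega>. (Y \<omega>)^2 \<partial>M) * C)" by simp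
  finally show ?thesis unfolding C_def .
qed

lemma stat_integral:
  fixes \<Phi> :: "('i \<Rightarrow> real) \<Rightarrow> real"
  assumes st: "stationary_process M Z" and K: "finite K"
    and \<Phi>: "\<Phi> \<in> borel_measurable (Pi\<^sub>M K (\<lambda>_. borel))"
  shows "(\<integral>\<omega>. \<Phi> (\<lambda>i\<in>K. Z (idx i + h) \<omega>) \<partial>M) = (\<integral>\<omega>. \<Phi> (\<lambda>i\<in>K. Z (idx i) \<omega>) \<partial>M)"
proof -
  have Zm: "\<And>t. Z t \<in> borel_measurable M" using st stat_meas by blast
  have m: "(\<lambda>\<omega>. \<Phi> (\<lambda>i\<in>K. Z (idx i + h') \<omega>)) \<in> borel_measurable M" for h'
    by (rule measurable_compose[OF _ \<Phi>], rule measurable_restrict) (use Zm in auto)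
  have m0: "(\<lambda>\<omega>. \<Phi> (\<lambda>i\<in>K. Z (idx i) \<omega>)) \<in> borel_measurable M" using m[of 0] by simp
  show ?thesis
    using distr_eq_integral[OF stat_distr[OF st K \<Phi>, of idx h] m m0] by simp
qed

lemma Z_int:
  assumes P: "prob_space M" and st: "stationary_process M Z" and b: "\<And>t \<omega>. 0 \<le> Z t \<omega> \<and> Z t \<omega> \<le> 1"
  shows "integrable M (Z t)"
  using bounded_integrable[OF P stat_meas[OF st], of t 1] b by (auto simp: abs_le_iff)

lemma mean_t:
  assumes st: "stationary_process M Z"
  shows "(\<integral>\<omega>. Z t \<omega> \<partial>M) = (\<integral>\<omega>. Z 1 \<omega> \<partial>M)"
proof -
  have \<Phi>: "(\<lambda>x. x (0::nat)) \<in> borel_measurable (Pi\<^sub>M {0} (\<lambda>_. borel))"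
    by (rule measurable_component_singleton) simp
  show ?thesis
    using stat_integral[OF st _ \<Phi>, of "\<lambda>_. 1" "t - 1"] by simp
qed

lemma cov_shift:
  assumes st: "stationary_process M Z"
  shows "(\<integral>\<omega>. (Z s \<omega> - \<mu>) * (Z (s + int d) \<omega> - \<mu>) \<partial>M) = (\<integral>\<omega>. (Z 0 \<omega> - \<mu>) * (Z (int d) \<omega> - \<mu>) \<partial>M)"
proof -
  have \<Phi>: "(\<lambda>x. (x (0::nat) - \<mu>) * (x 1 - \<mu>)) \<in> borel_measurable (Pi\<^sub>M {0,1} (\<lambda>_. borel))"
    by measurable
  show ?thesis
    using stat_integral[OF st _ \<Phi>, of "\<lambda>i. if i = 0 then 0 else int d" s] by (simp add: add.commute)
qed

definition clip :: "real \<Rightarrow> real" where "clip u = max 0 (min 1 u)"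

lemma cov_le_beta:
  fixes Z :: "int \<Rightarrow> 'a \<Rightarrow> real"
  assumes P: "prob_space M" and st: "stationary_process M Z"
    and b: "\<And>t \<omega>. 0 \<le> Z t \<omega> \<and> Z t \<omega> \<le> 1"
    and mu: "\<mu> = (\<integral>\<omega>. Z 1 \<omega> \<partial>M)"
  shows "(\<integral>\<omega>. (Z 0 \<omega> - \<mu>) * (Z (int d) \<omega> - \<mu>) \<partial>M) \<le> beta_mix M Z d"
proof -
  have Zm[measurable]: "\<And>t. Z t \<in> borel_measurable M" using st stat_meas by blast
  have pm[measurable]: "past_block Z \<in> measurable M seq_space" using past_meas[where Z=Z, OF Zm] by blast
  have fm[measurable]: "future_block Z d \<in> measurable M seq_space" using future_meas[where Z=Z, OF Zm] by blast
  have IZ: "\<And>t. integrable M (Z t)" using Z_int[OF P st b] by blast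
  have IZZ: "integrable M (\<lambda>\<omega>. Z 0 \<omega> * Z (int d) \<omega>)"
    using bounded_integrable[OF P _, of "\<lambda>\<omega>. Z 0 \<omega> * Z (int d) \<omega>" 1] b
    by (auto simp: abs_mult intro!: mult_le_one)
  have m0: "(\<integral>\<omega>. Z 0 \<omega> \<partial>M) = \<mu>" and md: "(\<integral>\<omega>. Z (int d) \<omega> \<partial>M) = \<mu>"
    using mean_t[OF st] mu by auto
  have cov: "(\<integral>\<omega>. (Z 0 \<omega> - \<mu>) * (Z (int d) \<omega> - \<mu>) \<partial>M) = (\<integral>\<omega>. Z 0 \<omega> * Z (int d) \<omega> \<partial>M) - \<mu> * \<mu>"
  proof -
    have "(\<lambda>\<omega>. (Z 0 \<omega> - \<mu>) * (Z (int d) \<omega> - \<mu>)) = (\<lambda>\<omega>. Z 0 \<omega> * Z (int d) \<omega> - \<mu> * Z (int d) \<omega> - \<mu> * Z 0 \<omega> + \<mu> * \<mu>)"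
      by (auto simp: algebra_simps)
    note fe = this
    have I1: "integrable M (\<lambda>\<omega>. \<mu> * Z t \<omega>)" for t using IZ by simp
    have IC: "integrable M (\<lambda>\<omega>. c)" for c :: real
      using finite_measure.integrable_const[OF prob_space.finite_measure[OF P]] .
    have "(\<integral>\<omega>. Z 0 \<omega> * Z (int d) \<omega> - \<mu> * Z (int d) \<omega> - \<mu> * Z 0 \<omega> + \<mu> * \<mu> \<partial>M)
       = (\<integral>\<omega>. Z 0 \<omega> * Z (int d) \<omega> - \<mu> * Z (int d) \<omega> - \<mu> * Z 0 \<omega> \<partial>M) + (\<integral>\<omega>. \<mu> * \<mu> \<partial>M)"
      by (rule Bochner_Integration.integral_add) (intro Bochner_Integration.integrable_diff IZZ I1 IC)+
    also have "(\<integral>\<omega>. Z 0 \<omega> * Z (int d) \<omega> - \<mu> * Z (int d) \<omega> - \<mu> * Z 0 \<omega> \<partial>M)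
       = (\<integral>\<omega>. Z 0 \<omega> * Z (int d) \<omega> - \<mu> * Z (int d) \<omega> \<partial>M) - (\<integral>\<omega>. \<mu> * Z 0 \<omega> \<partial>M)"
      by (rule Bochner_Integration.integral_diff) (intro Bochner_Integration.integrable_diff IZZ I1 IC)+
    also have "(\<integral>\<omega>. Z 0 \<omega> * Z (int d) \<omega> - \<mu> * Z (int d) \<omega> \<partial>M)
       = (\<integral>\<omega>. Z 0 \<omega> * Z (int d) \<omega> \<partial>M) - (\<integral>\<omega>. \<mu> * Z (int d) \<omega> \<partial>M)"
      by (rule Bochner_Integration.integral_diff) (intro IZZ I1)+
    finally have "(\<integral>\<omega>. Z 0 \<omega> * Z (int d) \<omega> - \<mu> * Z (int d) \<omega> - \<mu> * Z 0 \<omega> + \<mu> * \<mu> \<partial>M)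
       = (\<integral>\<omega>. Z 0 \<omega> * Z (int d) \<omega> \<partial>M) - \<mu> * (\<integral>\<omega>. Z (int d) \<omega> \<partial>M) - \<mu> * (\<integral>\<omega>. Z 0 \<omega> \<partial>M) + \<mu> * \<mu>"
      using prob_space.prob_space[OF P] by simp
    then show ?thesis using fe m0 md by simp
  qed
  define Pj where "Pj = distr M (seq_space \<Otimes>\<^sub>M seq_space) (\<lambda>\<omega>. (past_block Z \<omega>, future_block Z d \<omega>))"
  define Pp where "Pp = distr M seq_space (past_block Z)"
  define Pf where "Pf = distr M seq_space (future_block Z d)"
  have pairm: "(\<lambda>\<omega>. (past_block Z \<omega>, future_block Z d \<omega>)) \<in> measurable M (seq_space \<Otimes>\<^sub>M seq_space)"
    by measurable
  have PPp: "prob_space Pp" unfolding Pp_def using prob_space.prob_space_distr[OF P pm] .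
  have PPf: "prob_space Pf" unfolding Pf_def using prob_space.prob_space_distr[OF P fm] .
  have PPj: "prob_space Pj" unfolding Pj_def using prob_space.prob_space_distr[OF P pairm] .
  have PPq: "prob_space (Pp \<Otimes>\<^sub>M Pf)" using prob_space_pair[OF PPp PPf] .
  interpret PS: pair_sigma_finite Pp Pf
    using PPp PPf by (simp add: pair_sigma_finite_def prob_space_imp_sigma_finite)
  have sPq: "sets (Pp \<Otimes>\<^sub>M Pf) = sets (seq_space \<Otimes>\<^sub>M seq_space)"
    unfolding Pp_def Pf_def by (intro sets_pair_measure_cong) auto
  have clip01: "0 \<le> clip u" "clip u \<le> 1" for u unfolding clip_def by auto
  have clipid: "clip (Z t \<omega>) = Z t \<omega>" for t \<omega> using b[of t \<omega>] unfolding clip_def by auto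
  have clipm[measurable]: "clip \<in> borel_measurable borel" unfolding clip_def[abs_def] by measurable
  define f where "f z = clip (fst z 0) * clip (snd z 0)" for z :: "(nat \<Rightarrow> real) \<times> (nat \<Rightarrow> real)"
  have fm': "f \<in> borel_measurable (seq_space \<Otimes>\<^sub>M seq_space)" unfolding f_def[abs_def] by measurable
  have fmq: "f \<in> borel_measurable (Pp \<Otimes>\<^sub>M Pf)" using fm' sPq by (simp add: measurable_def space_pair_measure Pp_def Pf_def)
  have f01: "0 \<le> f z \<and> f z \<le> 1" for z unfolding f_def using clip01 by (auto intro: mult_le_one)
  have Ij: "(\<integral>z. f z \<partial>Pj) = (\<integral>\<omega>. Z 0 \<omega> * Z (int d) \<omega> \<partial>M)"
    unfolding Pj_def
    by (subst integral_distr[OF pairm fm']) (simp add: f_def past_block_def future_block_def clipid)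
  have intq: "integrable (Pp \<Otimes>\<^sub>M Pf) f"
    using bounded_integrable[OF PPq fmq, of 1] f01 by auto
  have Ip: "(\<integral>x. clip (x 0) \<partial>Pp) = \<mu>"
    unfolding Pp_def by (subst integral_distr[OF pm]) (auto simp: past_block_def clipid m0)
  have If: "(\<integral>y. clip (y 0) \<partial>Pf) = \<mu>"
    unfolding Pf_def by (subst integral_distr[OF fm]) (auto simp: future_block_def clipid md)
  have Iq: "(\<integral>z. f z \<partial>(Pp \<Otimes>\<^sub>M Pf)) = \<mu> * \<mu>"
  proof -
    have "(\<integral>z. f z \<partial>(Pp \<Otimes>\<^sub>M Pf)) = (\<integral>x. (\<integral>y. f (x, y) \<partial>Pf) \<partial>Pp)"
      using PS.integral_fst'[OF intq] by simp
    also have "\<dots> = (\<integral>x. clip (x 0) * \<mu> \<partial>Pp)"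
      unfolding f_def using If by simp
    also have "\<dots> = \<mu> * \<mu>" using Ip by simp
    finally show ?thesis .
  qed
  have "(\<integral>z. f z \<partial>Pj) - (\<integral>z. f z \<partial>(Pp \<Otimes>\<^sub>M Pf)) \<le> tv_dist Pj (Pp \<Otimes>\<^sub>M Pf)"
    by (rule tv_fun[OF PPj PPq]) (use sPq fm' f01 in \<open>auto simp: Pj_def\<close>)
  then show ?thesis
    unfolding cov beta_mix_def using Ij Iq by (simp add: Pj_def Pp_def Pf_def)
qed

lemma double_sum_bound:
  fixes \<gamma> \<beta> :: "nat \<Rightarrow> real"
  assumes g0: "\<gamma> 0 = v" and gb: "\<And>d. d \<ge> 1 \<Longrightarrow> \<gamma> d \<le> \<beta> d"
  shows "(\<Sum>i<a. \<Sum>j<a. \<gamma> (if i \<le> j then j - i else i - j)) \<le> a * v + 2 * (\<Sum>k<a. real (a - Suc k) * \<beta> (Suc k))"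
proof (induction a)
  case 0 then show ?case by simp
next
  case (Suc a)
  define g where "g i j = \<gamma> (if i \<le> j then j - i else i - j)" for i j :: nat
  have L: "(\<Sum>i<Suc a. \<Sum>j<Suc a. g i j) = (\<Sum>i<a. \<Sum>j<a. g i j) + (\<Sum>i<a. g i a) + (\<Sum>j<a. g a j) + g a a"
    by (simp add: sum.distrib)
  have c1: "(\<Sum>i<a. g i a) \<le> (\<Sum>k<a. \<beta> (Suc k))"
  proof -
    have "(\<Sum>i<a. g i a) \<le> (\<Sum>i<a. \<beta> (a - i))"
      unfolding g_def using gb by (intro sum_mono) auto
    also have "\<dots> = (\<Sum>i<a. (\<beta> \<circ> Suc) (a - Suc i))"
      by (intro sum.cong) (auto simp: Suc_diff_Suc)
    also have "\<dots> = (\<Sum>k<a. \<beta> (Suc k))" by (subst sum.nat_diff_reindex) simp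
    finally show ?thesis .
  qed
  have c2: "(\<Sum>j<a. g a j) = (\<Sum>i<a. g i a)"
    unfolding g_def by (intro sum.cong) auto
  have R: "(\<Sum>k<Suc a. real (Suc a - Suc k) * \<beta> (Suc k)) = (\<Sum>k<a. real (a - Suc k) * \<beta> (Suc k)) + (\<Sum>k<a. \<beta> (Suc k))"
  proof -
    have "(\<Sum>k<Suc a. real (Suc a - Suc k) * \<beta> (Suc k)) = (\<Sum>k<a. real (a - k) * \<beta> (Suc k))" by simp
    also have "\<dots> = (\<Sum>k<a. real (a - Suc k) * \<beta> (Suc k) + \<beta> (Suc k))"
      by (intro sum.cong) (auto simp: of_nat_diff algebra_simps)
    finally show ?thesis by (simp add: sum.distrib)
  qed
  have "g a a = v" unfolding g_def using g0 by simp
  then show ?case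
    using Suc.IH L c1 c2 R unfolding g_def by (simp add: algebra_simps)
qed

lemma var_bound:
  fixes Z :: "int \<Rightarrow> 'a \<Rightarrow> real"
  assumes P: "prob_space M" and st: "stationary_process M Z"
    and b: "\<And>t \<omega>. 0 \<le> Z t \<omega> \<and> Z t \<omega> \<le> 1" and a: "a > 0"
    and mu: "\<mu> = (\<integral>\<omega>. Z 1 \<omega> \<partial>M)" and v: "v = (\<integral>\<omega>. (Z 1 \<omega> - \<mu>)^2 \<partial>M)"
  shows "(\<integral>\<omega>. (Wb Z a 0 0 \<omega> / a - \<mu>)^2 \<partial>M) \<le> (v + 2 / a * (\<Sum>k<a. real (a - Suc k) * beta_mix M Z (Suc k))) / a"
proof -
  have Zm[measurable]: "\<And>t. Z t \<in> borel_measurable M" using st stat_meas by blast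
  define X where "X i \<omega> = Z (int i) \<omega> - \<mu>" for i \<omega>
  define \<gamma> where "\<gamma> d = (\<integral>\<omega>. (Z 0 \<omega> - \<mu>) * (Z (int d) \<omega> - \<mu>) \<partial>M)" for d :: nat
  have mu01: "0 \<le> \<mu>" "\<mu> \<le> 1"
  proof -
    have "0 \<le> (\<integral>\<omega>. Z 1 \<omega> \<partial>M)" using b by (intro integral_nonneg_AE) auto
    moreover have "(\<integral>\<omega>. Z 1 \<omega> \<partial>M) \<le> (\<integral>\<omega>. 1 \<partial>M)"
      using b Z_int[OF P st b] finite_measure.integrable_const[OF prob_space.finite_measure[OF P]]
      by (intro integral_mono) auto
    ultimately show "0 \<le> \<mu>" "\<mu> \<le> 1" using mu prob_space.prob_space[OF P] by auto
  qed
  have Xb: "\<bar>X i \<omega>\<bar> \<le> 1" for i \<omega> unfolding X_def using b[of "int i" \<omega>] mu01 by auto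
  have IXX: "integrable M (\<lambda>\<omega>. X i \<omega> * X j \<omega>)" for i j
  proof (rule bounded_integrable[OF P _, of _ 1])
    show "(\<lambda>\<omega>. X i \<omega> * X j \<omega>) \<in> borel_measurable M" unfolding X_def by measurable
    fix \<omega> show "\<bar>X i \<omega> * X j \<omega>\<bar> \<le> 1" using Xb[of i \<omega>] Xb[of j \<omega>]
      by (simp add: abs_mult mult_le_one)
  qed
  have eq1: "(Wb Z a 0 0 \<omega> / a - \<mu>)^2 = (\<Sum>i<a. \<Sum>j<a. X i \<omega> * X j \<omega>) / (real a)^2" for \<omega>
  proof -
    have "Wb Z a 0 0 \<omega> / a - \<mu> = (\<Sum>i<a. X i \<omega>) / a"
      using a unfolding Wb_def X_def by (simp add: sum_subtractf field_simps)
    then show ?thesis by (simp add: power2_eq_square sum_product power_divide)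
  qed
  have cov: "(\<integral>\<omega>. X i \<omega> * X j \<omega> \<partial>M) = \<gamma> (if i \<le> j then j - i else i - j)" for i j
  proof (cases "i \<le> j")
    case True
    then have "int j = int i + int (j - i)" by simp
    then show ?thesis using True cov_shift[OF st, where s="int i" and d="j - i" and \<mu>=\<mu>] unfolding X_def \<gamma>_def by simp
  next
    case False
    then have "int i = int j + int (i - j)" by simp
    then show ?thesis using False cov_shift[OF st, where s="int j" and d="i - j" and \<mu>=\<mu>] unfolding X_def \<gamma>_def
      by (simp add: mult.commute)
  qed
  have g0: "\<gamma> 0 = v"
    using cov_shift[OF st, where s=1 and d=0 and \<mu>=\<mu>] unfolding \<gamma>_def v by (simp add: power2_eq_square)
  have gb: "\<gamma> d \<le> beta_mix M Z d" if "d \<ge> 1" for d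
    unfolding \<gamma>_def by (rule cov_le_beta[OF P st b mu])
  have "(\<integral>\<omega>. (Wb Z a 0 0 \<omega> / a - \<mu>)^2 \<partial>M) = (\<Sum>i<a. \<Sum>j<a. (\<integral>\<omega>. X i \<omega> * X j \<omega> \<partial>M)) / (real a)^2"
    unfolding eq1 using IXX by (simp add: integral_sum)
  also have "\<dots> = (\<Sum>i<a. \<Sum>j<a. \<gamma> (if i \<le> j then j - i else i - j)) / (real a)^2"
    using cov by simp
  also have "\<dots> \<le> (a * v + 2 * (\<Sum>k<a. real (a - Suc k) * beta_mix M Z (Suc k))) / (real a)^2"
    by (intro divide_right_mono double_sum_bound[where \<beta>="beta_mix M Z", OF g0 gb]) auto
  also have "\<dots> = (v + 2 / a * (\<Sum>k<a. real (a - Suc k) * beta_mix M Z (Suc k))) / a"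
    using a by (simp add: field_simps power2_eq_square)
  finally show ?thesis .
qed

lemma F_deriv:
  fixes x :: real assumes p: "3 * x^2 - 1 > 0"
  shows "((\<lambda>x. ln ((3 * x^2 - 1) / 2) - 6 * (x - 1) * (2 * x - 1) / (3 * x^2 - 1)) has_real_derivative (18 * (x - 1)^3 / (3 * x^2 - 1)^2)) (at x)"
proof -
  have "((\<lambda>x. ln ((3 * x^2 - 1) / 2) - 6 * (x - 1) * (2 * x - 1) / (3 * x^2 - 1)) has_real_derivative
     (inverse ((3 * x^2 - 1) / 2) * (3 * (2 * x) / 2) - ((6 * (2 * x - 1) + 6 * (x - 1) * 2) * (3 * x^2 - 1) - 6 * (x - 1) * (2 * x - 1) * (3 * (2 * x))) / (3 * x^2 - 1)^2)) (at x)"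
    using p by (auto intro!: derivative_eq_intros simp: power2_eq_square)
  moreover have "inverse ((3 * x^2 - 1) / 2) * (3 * (2 * x) / 2) - ((6 * (2 * x - 1) + 6 * (x - 1) * 2) * (3 * x^2 - 1) - 6 * (x - 1) * (2 * x - 1) * (3 * (2 * x))) / (3 * x^2 - 1)^2
      = 18 * (x - 1)^3 / (3 * x^2 - 1)^2"
  proof -
    define D where "D = 3 * x^2 - 1"
    have Dp: "D > 0" using p unfolding D_def .
    have e1: "inverse (D / 2) * (3 * (2 * x) / 2) = (6 * x * D) / D^2"
      using Dp by (simp add: field_simps power2_eq_square)
    have e2: "6 * x * D - ((6 * (2 * x - 1) + 6 * (x - 1) * 2) * D - 6 * (x - 1) * (2 * x - 1) * (3 * (2 * x))) = 18 * (x - 1)^3"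
      unfolding D_def by (simp add: algebra_simps power2_eq_square power3_eq_cube)
    show ?thesis unfolding D_def[symmetric] e1 diff_divide_distrib[symmetric] e2 ..
  qed
  ultimately show ?thesis by simp
qed

lemma key_ln:
  fixes u :: real
  assumes u: "u \<ge> 1"
  shows "6 * (u - 1) * (2 * u - 1) \<le> (3 * u^2 - 1) * ln ((3 * u^2 - 1) / 2)"
proof -
  define F where "F x = ln ((3 * x^2 - 1) / 2) - 6 * (x - 1) * (2 * x - 1) / (3 * x^2 - 1)" for x :: real
  have D: "(F has_real_derivative (18 * (x - 1)^3 / (3 * x^2 - 1)^2)) (at x)" if x: "x \<ge> 1" for x
  proof -
    have "x^2 \<ge> 1" using one_le_power[OF x] . then have p: "3 * x^2 - 1 > 0" by linarith
    show ?thesis unfolding F_def[abs_def] by (rule F_deriv[OF p])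
  qed
  have "F 1 \<le> F u"
    by (rule DERIV_nonneg_imp_nondecreasing[OF u]) (use D in \<open>auto intro!: exI divide_nonneg_nonneg\<close>)
  then have "0 \<le> F u" by (simp add: F_def)
  moreover have "u^2 \<ge> 1" using one_le_power[OF u] . then have p: "3 * u^2 - 1 > 0" by linarith
  ultimately show ?thesis unfolding F_def by (simp add: field_simps)
qed


lemma scalar_choice:
  fixes V l t :: real
  assumes V: "V \<ge> 0" and l: "l > 0" and t: "t \<ge> sqrt (2 * V * l) + l / 3"
  shows "\<exists>lam\<ge>0. lam * t - V * (exp lam - 1 - lam) \<ge> l"
proof (cases "V = 0")
  case True
  then show ?thesis using t by (intro exI[of _ 3]) auto
next
  case False
  then have Vp: "V > 0" using V by simp
  define y where "y = l / V"
  have yp: "y > 0" unfolding y_def using Vp l by simp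
  define s where "s = sqrt (2 * y)"
  have s0: "s \<ge> 0" unfolding s_def using yp by simp
  have s2: "s^2 = 2 * y" unfolding s_def using yp by (simp add: less_imp_le)
  define u where "u = 1 + s / 3"
  have u1: "u \<ge> 1" unfolding u_def using s0 by simp
  define x where "x = s + y / 3"
  have x0: "x \<ge> 0" unfolding x_def using s0 yp by simp
  have ux: "1 + x = (3 * u^2 - 1) / 2" unfolding u_def x_def using s2
    by (simp add: power2_eq_square field_simps)
  have uy: "y = 9 / 2 * (u - 1)^2" unfolding u_def using s2 by (simp add: power2_eq_square field_simps)
  define lam where "lam = ln (1 + x)"
  have l0: "lam \<ge> 0" unfolding lam_def using x0 by simp
  have el: "exp lam = 1 + x" unfolding lam_def using x0 by simp
  have Vs: "V * s = sqrt (2 * V * l)"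
  proof -
    have "V * s = sqrt (V^2) * sqrt (2 * y)" unfolding s_def using Vp by simp
    also have "\<dots> = sqrt (V^2 * (2 * y))" by (simp add: real_sqrt_mult)
    also have "V^2 * (2 * y) = 2 * V * l" unfolding y_def using Vp by (simp add: power2_eq_square field_simps)
    finally show ?thesis .
  qed
  have t0: "t \<ge> V * x" unfolding x_def using t Vs Vp unfolding y_def by (simp add: algebra_simps)
  have key: "6 * (u - 1) * (2 * u - 1) \<le> (3 * u^2 - 1) * ln ((3 * u^2 - 1) / 2)" by (rule key_ln[OF u1])
  have "y \<le> (1 + x) * lam - x"
  proof -
    have xu: "x = (3 * u^2 - 1) / 2 - 1" using ux by (simp add: field_simps)
    have e: "(1 + x) * lam - x = (3 * u^2 - 1) / 2 * ln ((3 * u^2 - 1) / 2) - ((3 * u^2 - 1) / 2 - 1)"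
      unfolding lam_def ux by (simp add: xu)
    show ?thesis unfolding e uy using key by (simp add: power2_eq_square field_simps)
  qed
  then have "l \<le> V * ((1 + x) * lam - x)" unfolding y_def using Vp by (simp add: field_simps)
  also have "V * ((1 + x) * lam - x) = lam * (V * x) - V * (exp lam - 1 - lam)" unfolding el by (simp add: algebra_simps)
  also have "\<dots> \<le> lam * t - V * (exp lam - 1 - lam)" using t0 l0 by (simp add: mult_left_mono)
  finally show ?thesis using l0 by blast
qed

lemma sum_split_add: "(\<Sum>i<x + y. f i) = (\<Sum>i<x. f i) + (\<Sum>i<y. f (x + i))" for f :: "nat \<Rightarrow> real"
  by (induction y) (auto simp: add_ac)

lemma decomp_sum:
  "(\<Sum>i<2*m*a. Z (1 + int i) \<omega>) = (\<Sum>j<m. Wb Z a 1 j \<omega> + Wb Z a (int a + 1) j \<omega>)"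
proof (induction m)
  case 0 then show ?case by simp
next
  case (Suc m)
  have e: "2 * Suc m * a = 2*m*a + (a + a)" by simp
  have "(\<Sum>i<2 * Suc m * a. Z (1 + int i) \<omega>) = (\<Sum>i<2*m*a. Z (1 + int i) \<omega>) + (\<Sum>i<a + a. Z (1 + int (2*m*a + i)) \<omega>)"
    unfolding e by (rule sum_split_add)
  also have "(\<Sum>i<a + a. Z (1 + int (2*m*a + i)) \<omega>) = Wb Z a 1 m \<omega> + Wb Z a (int a + 1) m \<omega>"
    unfolding sum_split_add Wb_def by (simp add: algebra_simps)
  finally show ?case using Suc.IH by simp
qed

lemma tv_nonneg:
  assumes "prob_space P" "prob_space Q" shows "0 \<le> tv_dist P Q"
  using tv_upper[OF assms, of "{}"] by simp

lemma beta_nonneg: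
  assumes P: "prob_space M" and st: "stationary_process M Z"
  shows "0 \<le> beta_mix M Z a"
proof -
  have Zm[measurable]: "\<And>t. Z t \<in> borel_measurable M" using st stat_meas by blast
  have pm[measurable]: "past_block Z \<in> measurable M seq_space" using past_meas[where Z=Z, OF Zm] by blast
  have fm[measurable]: "future_block Z a \<in> measurable M seq_space" using future_meas[where Z=Z, OF Zm] by blast
  have pairm: "(\<lambda>\<omega>. (past_block Z \<omega>, future_block Z a \<omega>)) \<in> measurable M (seq_space \<Otimes>\<^sub>M seq_space)"
    by measurable
  show ?thesis unfolding beta_mix_def
    by (intro tv_nonneg prob_space.prob_space_distr[OF P] prob_space_pair) (use pairm in auto)
qed

lemma tail_event:
  fixes Z :: "int \<Rightarrow> 'a \<Rightarrow> real"
  assumes P: "prob_space M" and st: "stationary_process M Z"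
    and b: "\<And>t \<omega>. 0 \<le> Z t \<omega> \<and> Z t \<omega> \<le> 1" and a: "a > 0" and m: "m \<ge> 1"
    and sg: "\<sigma> = 1 \<or> \<sigma> = -1" and lam: "lam \<ge> 0"
    and mu: "\<mu> = (\<integral>\<omega>. Z 1 \<omega> \<partial>M)"
    and V: "V = (\<integral>\<omega>. (Wb Z a 0 0 \<omega> / a - \<mu>)^2 \<partial>M)"
    and hyp: "lam * t - V * (exp lam - 1 - lam) \<ge> l"
  shows "measure M {\<omega>\<in>space M. (\<Sum>j<m. \<sigma> * (Wb Z a p j \<omega> / a - \<mu>)) \<ge> m * t}
           \<le> exp (- (m * l)) + (real m - 1) * beta_mix M Z a"
proof -
  have Zm[measurable]: "\<And>t. Z t \<in> borel_measurable M" using st stat_meas by blast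
  have Wm[measurable]: "\<And>p j. Wb Z a p j \<in> borel_measurable M" using Wb_meas[where Z=Z, OF Zm] by blast
  have s2: "\<sigma> * \<sigma> = 1" using sg by auto
  have mu01: "0 \<le> \<mu>" "\<mu> \<le> 1"
  proof -
    have "0 \<le> (\<integral>\<omega>. Z 1 \<omega> \<partial>M)" using b by (intro integral_nonneg_AE) auto
    moreover have "(\<integral>\<omega>. Z 1 \<omega> \<partial>M) \<le> (\<integral>\<omega>. 1 \<partial>M)"
      using b Z_int[OF P st b] finite_measure.integrable_const[OF prob_space.finite_measure[OF P]]
      by (intro integral_mono) auto
    ultimately show "0 \<le> \<mu>" "\<mu> \<le> 1" using mu prob_space.prob_space[OF P] by auto
  qed
  define c where "c = \<sigma> * lam / a"
  define r where "r = lam * m * t + \<sigma> * lam * m * \<mu>"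
  define \<psi> where "\<psi> = (\<integral>\<omega>. exp (c * Wb Z a 0 0 \<omega>) \<partial>M)"
  have sub: "{\<omega>\<in>space M. (\<Sum>j<m. \<sigma> * (Wb Z a p j \<omega> / a - \<mu>)) \<ge> m * t} \<subseteq> {\<omega>\<in>space M. (\<Sum>j<m. c * Wb Z a p j \<omega>) \<ge> r}"
  proof safe
    fix \<omega> assume "\<omega> \<in> space M" and h: "m * t \<le> (\<Sum>j<m. \<sigma> * (Wb Z a p j \<omega> / a - \<mu>))"
    have "(\<Sum>j<m. c * Wb Z a p j \<omega>) = lam * (\<Sum>j<m. \<sigma> * (Wb Z a p j \<omega> / a - \<mu>)) + \<sigma> * lam * m * \<mu>"
      unfolding c_def by (simp add: sum_distrib_left sum_subtractf algebra_simps sum.distrib)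
    moreover have "lam * (m * t) \<le> lam * (\<Sum>j<m. \<sigma> * (Wb Z a p j \<omega> / a - \<mu>))"
      using h lam by (rule mult_left_mono)
    ultimately show "r \<le> (\<Sum>j<m. c * Wb Z a p j \<omega>)" unfolding r_def by (simp add: algebra_simps)
  qed
  have "measure M {\<omega>\<in>space M. (\<Sum>j<m. \<sigma> * (Wb Z a p j \<omega> / a - \<mu>)) \<ge> m * t}
        \<le> measure M {\<omega>\<in>space M. (\<Sum>j<m. c * Wb Z a p j \<omega>) \<ge> r}"
    by (rule finite_measure.finite_measure_mono[OF prob_space.finite_measure[OF P] sub]) measurable
  also have "\<dots> \<le> exp (-r) * \<psi>^m + (real m - 1) * beta_mix M Z a"
    unfolding \<psi>_def by (rule blocking[OF P st b a m])
  also have "exp (-r) * \<psi>^m = (exp (- lam * t) * (exp (- \<sigma> * lam * \<mu>) * \<psi>))^m"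
    unfolding r_def by (simp add: power_mult_distrib exp_of_nat_mult[symmetric] exp_add[symmetric] algebra_simps)
  also have "\<dots> \<le> (exp (- l))^m"
  proof (rule power_mono)
    define Y where "Y \<omega> = \<sigma> * (Wb Z a 0 0 \<omega> / a - \<mu>)" for \<omega>
    have Ym: "Y \<in> borel_measurable M" unfolding Y_def by measurable
    have Yb: "\<bar>Y \<omega>\<bar> \<le> 1" for \<omega>
    proof -
      have "0 \<le> Wb Z a 0 0 \<omega> / a" "Wb Z a 0 0 \<omega> / a \<le> 1"
        using Wb_bounds[where Z=Z, OF b, of a 0 0 \<omega>] a by (auto simp: field_simps)
      then show ?thesis unfolding Y_def using sg mu01 by auto
    qed
    have IZ: "\<And>t. integrable M (Z t)" using Z_int[OF P st b] by blast
    have EW: "(\<integral>\<omega>. Wb Z a 0 0 \<omega> \<partial>M) = a * \<mu>"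
    proof -
      have mi: "integral\<^sup>L M (Z (int i)) = \<mu>" for i using mean_t[OF st, of "int i"] mu by simp
      show ?thesis unfolding Wb_def using IZ by (simp add: integral_sum mi)
    qed
    have Y0: "(\<integral>\<omega>. Y \<omega> \<partial>M) = 0"
    proof -
      have IW: "integrable M (Wb Z a 0 0)" unfolding Wb_def[abs_def] using IZ by simp
      have "(\<integral>\<omega>. Y \<omega> \<partial>M) = \<sigma> * ((\<integral>\<omega>. Wb Z a 0 0 \<omega> \<partial>M) / a - \<mu>)"
        unfolding Y_def using IW prob_space.prob_space[OF P]
        by (simp add: Bochner_Integration.integral_diff finite_measure.integrable_const[OF prob_space.finite_measure[OF P]])
      then show ?thesis using EW a by simp
    qed
    have Y2: "(\<integral>\<omega>. (Y \<omega>)^2 \<partial>M) = V"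
      unfolding Y_def V power_mult_distrib using s2 by (simp add: power2_eq_square)
    have "(\<integral>\<omega>. exp (lam * Y \<omega>) \<partial>M) = (\<integral>\<omega>. exp (- \<sigma> * lam * \<mu>) * exp (c * Wb Z a 0 0 \<omega>) \<partial>M)"
      unfolding Y_def c_def using a
      by (intro Bochner_Integration.integral_cong refl) (simp add: exp_add[symmetric] field_simps)
    then have "exp (- \<sigma> * lam * \<mu>) * \<psi> = (\<integral>\<omega>. exp (lam * Y \<omega>) \<partial>M)"
      unfolding \<psi>_def by simp
    also have "\<dots> \<le> exp (V * (exp lam - 1 - lam))"
      using mgf_bound[OF P Ym Yb Y0 lam] Y2 by simp
    finally have "exp (- \<sigma> * lam * \<mu>) * \<psi> \<le> exp (V * (exp lam - 1 - lam))" .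
    then have "exp (- lam * t) * (exp (- \<sigma> * lam * \<mu>) * \<psi>) \<le> exp (- lam * t) * exp (V * (exp lam - 1 - lam))"
      by (simp add: mult_left_mono)
    also have "\<dots> = exp (- (lam * t - V * (exp lam - 1 - lam)))" by (simp add: exp_add[symmetric])
    also have "\<dots> \<le> exp (- l)" using hyp by simp
    finally show "exp (- lam * t) * (exp (- \<sigma> * lam * \<mu>) * \<psi>) \<le> exp (- l)" .
    show "0 \<le> exp (- lam * t) * (exp (- \<sigma> * lam * \<mu>) * \<psi>)"
      unfolding \<psi>_def by (intro mult_nonneg_nonneg integral_nonneg_AE) auto
  qed
  also have "(exp (- l))^m = exp (- (m * l))" by (simp add: exp_of_nat_mult[symmetric])
  finally show ?thesis by simp
qed

lemma Rs_eq: "(\<Sum>k = 1..a - 1. real (a - k) * \<beta> k) = (\<Sum>k<a. real (a - Suc k) * \<beta> (Suc k))"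
proof (cases a)
  case 0 then show ?thesis by simp
next
  case (Suc b)
  have "(\<Sum>k = 1..a - 1. real (a - k) * \<beta> k) = (\<Sum>k<b. real (a - Suc k) * \<beta> (Suc k))"
    using Suc by (simp add: sum.atLeast1_atMost_eq)
  also have "\<dots> = (\<Sum>k<a. real (a - Suc k) * \<beta> (Suc k))" using Suc by simp
  finally show ?thesis .
qed

theorem main_bounded:
  fixes M :: "'a measure" and Z :: "int \<Rightarrow> 'a \<Rightarrow> real"
    and v \<delta> :: real and m a s n :: nat
  assumes P: "prob_space M" and st: "stationary_process M Z"
    and b: "\<And>t \<omega>. 0 \<le> Z t \<omega> \<and> Z t \<omega> \<le> 1"
    and vdef: "(LINT \<omega>|M. (Z 1 \<omega> - (LINT \<omega>'|M. Z 1 \<omega>'))\<^sup>2) = v"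
    and m1: "m > 1" and a: "a > 0" and s: "s > 0"
    and n: "n = 2 * m * a + s"
    and dl: "\<delta> > 4 * (real m - 1) * beta_mix M Z a"
  shows "measure M {\<omega> \<in> space M.
           \<bar>(LINT \<omega>'|M. Z 1 \<omega>') - (1 / real n) * (\<Sum>i = 1..n. Z (int i) \<omega>)\<bar>
           \<le> (let L = ln (4 / (\<delta> - 4 * (real m - 1) * beta_mix M Z a));
                  \<sigma> = sqrt (v + (2 / real a) * (\<Sum>k = 1..a - 1. real (a - k) * beta_mix M Z k))
              in \<sigma> * sqrt ((4 / real n) * L) + (1 / (3 * real m)) * L + real s / real n)}
         \<ge> 1 - \<delta>"
proof (cases "\<delta> \<ge> 1")
  case True
  then show ?thesis by (smt (verit) measure_nonneg)
next
  case False
  have Zm[measurable]: "\<And>t. Z t \<in> borel_measurable M" using st stat_meas by blast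
  have Wm[measurable]: "\<And>p j. Wb Z a p j \<in> borel_measurable M" using Wb_meas[where Z=Z, OF Zm] by blast
  define \<mu> where "\<mu> = (LINT \<omega>'|M. Z 1 \<omega>')"
  define \<beta> where "\<beta> = beta_mix M Z a"
  define \<delta>' where "\<delta>' = \<delta> - 4 * (real m - 1) * \<beta>"
  define L where "L = ln (4 / \<delta>')"
  define Rs where "Rs = (\<Sum>k = 1..a - 1. real (a - k) * beta_mix M Z k)"
  define \<sigma> where "\<sigma> = sqrt (v + (2 / real a) * Rs)"
  define \<epsilon> where "\<epsilon> = \<sigma> * sqrt ((4 / real n) * L) + (1 / (3 * real m)) * L + real s / real n"
  have b0: "\<beta> \<ge> 0" unfolding \<beta>_def by (rule beta_nonneg[OF P st])
  have d'pos: "\<delta>' > 0" unfolding \<delta>'_def \<beta>_def using dl by simp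
  have d'1: "\<delta>' < 1" unfolding \<delta>'_def using False b0 m1 by (smt (verit) mult_nonneg_nonneg of_nat_1 of_nat_less_iff)
  have Lpos: "L > 0" unfolding L_def using d'pos d'1 by (simp add: ln_gt_zero_iff divide_simps)
  have expL: "exp (- L) = \<delta>' / 4" unfolding L_def using d'pos by (simp add: exp_minus)
  have mpos: "real m > 0" using m1 by simp
  have npos: "real n > 0" using n s by (simp add: add_nonneg_pos)
  have n2: "real n \<ge> 2 * real m * real a" using n by simp
  define V where "V = (\<integral>\<omega>. (Wb Z a 0 0 \<omega> / a - \<mu>)^2 \<partial>M)"
  have V0: "V \<ge> 0" unfolding V_def by (intro integral_nonneg_AE) auto
  have Vle: "V \<le> (v + 2 / a * Rs) / a"
    using var_bound[OF P st b a \<mu>_def vdef[symmetric, folded \<mu>_def]] unfolding V_def Rs_def Rs_eq by simp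
  have "0 \<le> (v + 2 / a * Rs) / a" using V0 Vle by linarith
  then have s20: "v + 2 / a * Rs \<ge> 0" using a by (simp add: zero_le_divide_iff)
  have \<sigma>2: "\<sigma>^2 = v + 2 / a * Rs" unfolding \<sigma>_def by (rule real_sqrt_pow2[OF s20])
  have \<sigma>0: "\<sigma> \<ge> 0" unfolding \<sigma>_def by (rule real_sqrt_ge_zero[OF s20])
  define l where "l = L / m"
  have lpos: "l > 0" unfolding l_def using Lpos mpos by simp
  define q where "q = real n / (2 * real m * real a)"
  have q1: "q \<ge> 1" unfolding q_def using n2 mpos a by simp
  define t where "t = (\<sigma> * sqrt ((4 / real n) * L) + (1 / (3 * real m)) * L) * q"
  have tq: "t * (2 * real m * real a) = (\<epsilon> - real s / real n) * real n"
    unfolding t_def q_def \<epsilon>_def using mpos a by (simp add: field_simps)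
  have tge: "t \<ge> sqrt (2 * V * l) + l / 3"
  proof -
    have p1: "sqrt (2 * V * l) \<le> \<sigma> * sqrt ((4 / real n) * L) * q"
    proof -
      have "2 * V * l \<le> 2 * ((v + 2 / a * Rs) / a) * l"
        using Vle lpos by (intro mult_right_mono mult_left_mono) auto
      also have "\<dots> = \<sigma>^2 * (2 * L / (real a * real m))" unfolding \<sigma>2 l_def by (simp add: field_simps)
      also have "\<dots> \<le> \<sigma>^2 * ((4 / real n) * L * q^2)"
      proof (intro mult_left_mono)
        have "(4 / real n) * L * q^2 = L * real n / (real m * real a)^2"
          unfolding q_def using npos by (simp add: field_simps power2_eq_square)
        also have "\<dots> \<ge> 2 * L / (real a * real m)"
          using n2 Lpos mpos a by (simp add: field_simps power2_eq_square)
        finally show "2 * L / (real a * real m) \<le> (4 / real n) * L * q^2" .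
      qed simp
      finally have "sqrt (2 * V * l) \<le> sqrt (\<sigma>^2 * ((4 / real n) * L * q^2))" by (rule real_sqrt_le_mono)
      also have "\<sigma>^2 * ((4 / real n) * L * q^2) = (\<sigma> * sqrt ((4 / real n) * L) * q)^2"
        using Lpos npos by (simp add: power_mult_distrib)
      also have "sqrt ((\<sigma> * sqrt ((4 / real n) * L) * q)^2) = \<sigma> * sqrt ((4 / real n) * L) * q"
        using \<sigma>0 q1 Lpos npos by (simp only: real_sqrt_abs) simp
      finally show ?thesis .
    qed
    have p2: "l / 3 \<le> (1 / (3 * real m)) * L * q"
    proof -
      have "l / 3 = (1 / (3 * real m)) * L * 1" unfolding l_def by simp
      also have "\<dots> \<le> (1 / (3 * real m)) * L * q" using q1 Lpos mpos by (intro mult_left_mono) auto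
      finally show ?thesis .
    qed
    show ?thesis using p1 p2 unfolding t_def by (simp add: algebra_simps)
  qed
  obtain lam where lam: "lam \<ge> 0" "lam * t - V * (exp lam - 1 - lam) \<ge> l"
    using scalar_choice[OF V0 lpos tge] by blast
  define E where "E sg p = {\<omega>\<in>space M. (\<Sum>j<m. sg * (Wb Z a p j \<omega> / a - \<mu>)) \<ge> m * t}" for sg :: real and p :: int
  have Em: "E sg p \<in> sets M" for sg p unfolding E_def by measurable
  have PE: "measure M (E sg p) \<le> \<delta>' / 4 + (real m - 1) * \<beta>" if sg: "sg = 1 \<or> sg = -1" for sg p
  proof -
    have "measure M (E sg p) \<le> exp (- (m * l)) + (real m - 1) * beta_mix M Z a"
      unfolding E_def by (rule tail_event[OF P st b a _ sg lam(1) \<mu>_def V_def lam(2)]) (use m1 in simp)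
    also have "exp (- (m * l)) = \<delta>' / 4" unfolding l_def using mpos expL by simp
    finally show ?thesis unfolding \<beta>_def .
  qed
  define U where "U = E 1 1 \<union> E (-1) 1 \<union> E 1 (int a + 1) \<union> E (-1) (int a + 1)"
  have Um: "U \<in> sets M" unfolding U_def using Em by auto
  have PU: "measure M U \<le> \<delta>' + 4 * (real m - 1) * \<beta>"
  proof -
    have "measure M U \<le> measure M (E 1 1) + measure M (E (-1) 1) + measure M (E 1 (int a + 1)) + measure M (E (-1) (int a + 1))"
    proof -
      have s1: "E 1 1 \<union> E (-1) 1 \<in> sets M" "E 1 1 \<union> E (-1) 1 \<union> E 1 (int a + 1) \<in> sets M" using Em by auto
      show ?thesis
        using measure_Un_le[OF s1(2) Em[of "-1" "int a + 1"]] measure_Un_le[OF s1(1) Em[of 1 "int a + 1"]]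
          measure_Un_le[OF Em[of 1 1] Em[of "-1" 1]]
        unfolding U_def by linarith
    qed
    also have "\<dots> \<le> 4 * (\<delta>' / 4 + (real m - 1) * \<beta>)" using PE[of 1 1] PE[of "-1" 1] PE[of 1 "int a + 1"] PE[of "-1" "int a + 1"] by simp
    finally show ?thesis by (simp add: algebra_simps)
  qed
  have G: "space M - U \<subseteq> {\<omega> \<in> space M. \<bar>\<mu> - (1 / real n) * (\<Sum>i = 1..n. Z (int i) \<omega>)\<bar> \<le> \<epsilon>}"
  proof safe
    fix \<omega> assume \<omega>: "\<omega> \<in> space M" "\<omega> \<notin> U"
    define A1 where "A1 = (\<Sum>j<m. (Wb Z a 1 j \<omega> / a - \<mu>))"
    define A2 where "A2 = (\<Sum>j<m. (Wb Z a (int a + 1) j \<omega> / a - \<mu>))"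
    have hA1: "A1 < m * t" "- A1 < m * t" and hA2: "A2 < m * t" "- A2 < m * t"
    proof -
      have neg: "(\<Sum>j<m. \<mu> - Wb Z a p j \<omega> / a) = - (\<Sum>j<m. Wb Z a p j \<omega> / a - \<mu>)" for p
        by (subst sum_negf[symmetric]) simp
      show "A1 < m * t" "- A1 < m * t" "A2 < m * t" "- A2 < m * t"
        using \<omega> unfolding U_def E_def A1_def A2_def by (auto simp: neg)
    qed
    have WA1: "(\<Sum>j<m. Wb Z a 1 j \<omega>) = a * A1 + a * m * \<mu>"
      unfolding A1_def using a by (simp add: sum_subtractf sum_divide_distrib[symmetric] field_simps)
    have WA2: "(\<Sum>j<m. Wb Z a (int a + 1) j \<omega>) = a * A2 + a * m * \<mu>"
      unfolding A2_def using a by (simp add: sum_subtractf sum_divide_distrib[symmetric] field_simps)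
    define Rr where "Rr = (\<Sum>i<s. Z (1 + int (2*m*a + i)) \<omega>)"
    have Rr: "0 \<le> Rr" "Rr \<le> s"
    proof -
      show "0 \<le> Rr" unfolding Rr_def using b by (intro sum_nonneg) auto
      have "Rr \<le> (\<Sum>i<s. 1)" unfolding Rr_def using b by (intro sum_mono) auto
      then show "Rr \<le> s" by simp
    qed
    have mu01: "0 \<le> \<mu>" "\<mu> \<le> 1"
    proof -
      have "0 \<le> (\<integral>\<omega>. Z 1 \<omega> \<partial>M)" using b by (intro integral_nonneg_AE) auto
      moreover have "(\<integral>\<omega>. Z 1 \<omega> \<partial>M) \<le> (\<integral>\<omega>. 1 \<partial>M)"
        using b Z_int[OF P st b] finite_measure.integrable_const[OF prob_space.finite_measure[OF P]]
        by (intro integral_mono) auto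
      ultimately show "0 \<le> \<mu>" "\<mu> \<le> 1" using \<mu>_def prob_space.prob_space[OF P] by auto
    qed
    have sumZ: "(\<Sum>i = 1..n. Z (int i) \<omega>) = a * A1 + a * A2 + 2 * a * m * \<mu> + Rr"
    proof -
      have "(\<Sum>i = 1..n. Z (int i) \<omega>) = (\<Sum>i<n. Z (1 + int i) \<omega>)"
        by (simp add: sum.atLeast1_atMost_eq add.commute)
      also have "\<dots> = (\<Sum>i<2*m*a. Z (1 + int i) \<omega>) + Rr"
        unfolding n Rr_def by (rule sum_split_add)
      also have "(\<Sum>i<2*m*a. Z (1 + int i) \<omega>) = (\<Sum>j<m. Wb Z a 1 j \<omega>) + (\<Sum>j<m. Wb Z a (int a + 1) j \<omega>)"
        unfolding decomp_sum by (simp add: sum.distrib)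
      finally show ?thesis unfolding WA1 WA2 by simp
    qed
    have "\<bar>\<mu> - (1 / real n) * (\<Sum>i = 1..n. Z (int i) \<omega>)\<bar> = \<bar>a * (A1 + A2) + (Rr - s * \<mu>)\<bar> / n"
    proof -
      have "real n * \<mu> = 2 * a * m * \<mu> + s * \<mu>" unfolding n by (simp add: algebra_simps)
      then have "\<mu> - (1 / real n) * (\<Sum>i = 1..n. Z (int i) \<omega>) = - (a * (A1 + A2) + (Rr - s * \<mu>)) / n"
        unfolding sumZ using npos by (simp add: field_simps)
      then show ?thesis using npos by (simp add: abs_divide)
    qed
    also have "\<dots> \<le> \<epsilon>"
    proof -
      have "\<bar>A1 + A2\<bar> < 2 * m * t" using hA1 hA2 by (simp add: abs_less_iff)
      then have "\<bar>a * (A1 + A2)\<bar> < 2 * m * t * a" using a by (simp add: abs_mult)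
      moreover have "\<bar>Rr - s * \<mu>\<bar> \<le> s"
      proof -
        have "s * \<mu> \<le> s" using mu01 by (simp add: mult_left_le)
        moreover have "0 \<le> s * \<mu>" using mu01 by simp
        ultimately show ?thesis using Rr unfolding abs_le_iff by linarith
      qed
      moreover have "\<bar>a * (A1 + A2) + (Rr - s * \<mu>)\<bar> \<le> \<bar>a * (A1 + A2)\<bar> + \<bar>Rr - s * \<mu>\<bar>"
        by (rule abs_triangle_ineq)
      moreover have "2 * m * t * a = t * (2 * m * a)" by simp
      ultimately have "\<bar>a * (A1 + A2) + (Rr - s * \<mu>)\<bar> \<le> t * (2 * m * a) + s" by linarith
      also have "\<dots> = \<epsilon> * n"
      proof -
        have "(\<epsilon> - real s / real n) * real n = \<epsilon> * n - s" using npos by (simp add: left_diff_distrib)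
        moreover have "real (2 * m * a) = 2 * real m * real a" by simp
        ultimately show ?thesis using tq by (simp only:)
      qed
      finally show ?thesis using npos by (simp add: field_simps)
    qed
    finally show "\<bar>\<mu> - (1 / real n) * (\<Sum>i = 1..n. Z (int i) \<omega>)\<bar> \<le> \<epsilon>" .
  qed
  have "1 - \<delta> = 1 - (\<delta>' + 4 * (real m - 1) * \<beta>)" unfolding \<delta>'_def by simp
  also have "\<dots> \<le> 1 - measure M U" using PU by simp
  also have "1 - measure M U = measure M (space M - U)"
    using prob_space.prob_compl[OF P Um] by simp
  also have "\<dots> \<le> measure M {\<omega> \<in> space M. \<bar>\<mu> - (1 / real n) * (\<Sum>i = 1..n. Z (int i) \<omega>)\<bar> \<le> \<epsilon>}"
    by (rule finite_measure.finite_measure_mono[OF prob_space.finite_measure[OF P] G]) measurable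
  finally show ?thesis unfolding \<epsilon>_def \<mu>_def L_def \<sigma>_def Rs_def \<delta>'_def \<beta>_def Let_def by simp
qed

lemma law_t:
  assumes st: "stationary_process M Z"
  shows "distr M borel (Z t) = distr M borel (Z 1)"
proof -
  have \<Phi>: "(\<lambda>x. x (0::nat)) \<in> borel_measurable (Pi\<^sub>M {0} (\<lambda>_. borel))"
    by (rule measurable_component_singleton) simp
  have "distr M borel (\<lambda>\<omega>. (\<lambda>x. x 0) (\<lambda>i\<in>{0::nat}. Z ((\<lambda>_. 1) i + (t - 1)) \<omega>))
      = distr M borel (\<lambda>\<omega>. (\<lambda>x. x 0) (\<lambda>i\<in>{0::nat}. Z ((\<lambda>_. 1) i) \<omega>))"
    by (rule stat_distr[OF st _ \<Phi>]) simp
  then show ?thesis by simp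
qed

lemma AE_t:
  assumes st: "stationary_process M Z" and ae: "AE \<omega> in M. Z 1 \<omega> \<in> {0..1}"
  shows "AE \<omega> in M. Z t \<omega> \<in> {0..1}"
proof -
  have Zm[measurable]: "\<And>t. Z t \<in> borel_measurable M" using st stat_meas by blast
  have "AE x in distr M borel (Z 1). x \<in> {0..1}"
    using ae by (subst AE_distr_iff) auto
  then have "AE x in distr M borel (Z t). x \<in> {0..1}" by (simp only: law_t[OF st, of t])
  then show ?thesis by (rule AE_distrD[rotated]) simp
qed

lemma clip_stationary:
  assumes st: "stationary_process M Z"
  shows "stationary_process M (\<lambda>t \<omega>. clip (Z t \<omega>))"
proof -
  have Zm[measurable]: "\<And>t. Z t \<in> borel_measurable M" using st stat_meas by blast
  have clipm[measurable]: "clip \<in> borel_measurable borel" unfolding clip_def[abs_def] by measurable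
  show ?thesis unfolding stationary_process_def
  proof (intro conjI allI impI)
    fix t show "(\<lambda>\<omega>. clip (Z t \<omega>)) \<in> borel_measurable M" by measurable
  next
    fix J :: "int set" and h :: int assume J: "finite J"
    define cl where "cl x = (\<lambda>t\<in>J. clip (x t))" for x :: "int \<Rightarrow> real"
    have clm: "cl \<in> measurable (Pi\<^sub>M J (\<lambda>_. borel)) (Pi\<^sub>M J (\<lambda>_. borel))"
      unfolding cl_def by (rule measurable_restrict) measurable
    have R: "(\<lambda>\<omega>. restrict (\<lambda>t. Z (t + h') \<omega>) J) \<in> measurable M (Pi\<^sub>M J (\<lambda>_. borel))" for h'
      by (rule measurable_restrict) auto
    have R0: "(\<lambda>\<omega>. restrict (\<lambda>t. Z t \<omega>) J) \<in> measurable M (Pi\<^sub>M J (\<lambda>_. borel))"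
      using R[of 0] by simp
    have eq: "distr M (Pi\<^sub>M J (\<lambda>_. borel)) (\<lambda>\<omega>. restrict (\<lambda>t. Z (t + h) \<omega>) J)
      = distr M (Pi\<^sub>M J (\<lambda>_. borel)) (\<lambda>\<omega>. restrict (\<lambda>t. Z t \<omega>) J)"
      using st J unfolding stationary_process_def by blast
    have e1: "(\<lambda>\<omega>. restrict (\<lambda>t. clip (Z (t + h) \<omega>)) J) = cl \<circ> (\<lambda>\<omega>. restrict (\<lambda>t. Z (t + h) \<omega>) J)"
      unfolding cl_def comp_def by (intro ext) (auto simp: restrict_def)
    have e2: "(\<lambda>\<omega>. restrict (\<lambda>t. clip (Z t \<omega>)) J) = cl \<circ> (\<lambda>\<omega>. restrict (\<lambda>t. Z t \<omega>) J)"
      unfolding cl_def comp_def by (intro ext) (auto simp: restrict_def)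
    show "distr M (Pi\<^sub>M J (\<lambda>_. borel)) (\<lambda>\<omega>. restrict (\<lambda>t. clip (Z (t + h) \<omega>)) J)
      = distr M (Pi\<^sub>M J (\<lambda>_. borel)) (\<lambda>\<omega>. restrict (\<lambda>t. clip (Z t \<omega>)) J)"
      unfolding e1 e2
      using distr_distr[OF clm R[of h], symmetric] distr_distr[OF clm R0, symmetric] eq by simp
  qed
qed

theorem lemmaB2:
  fixes M :: "'a measure" and Z :: "int \<Rightarrow> 'a \<Rightarrow> real"
    and v \<delta> :: real and m a s n :: nat
  assumes "prob_space M"
    and "stationary_beta_mixing M Z"
    and "AE \<omega> in M. Z 1 \<omega> \<in> {0..1}"
    and "(LINT \<omega>|M. (Z 1 \<omega> - (LINT \<omega>'|M. Z 1 \<omega>'))\<^sup>2) = v"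
    and "m > 1" and "a > 0" and "s > 0"
    and "n = 2 * m * a + s"
    and "\<delta> > 4 * (real m - 1) * beta_mix M Z a"
  shows "measure M {\<omega> \<in> space M.
           \<bar>(LINT \<omega>'|M. Z 1 \<omega>') - (1 / real n) * (\<Sum>i = 1..n. Z (int i) \<omega>)\<bar>
           \<le> (let L = ln (4 / (\<delta> - 4 * (real m - 1) * beta_mix M Z a));
                  \<sigma> = sqrt (v + (2 / real a) * (\<Sum>k = 1..a - 1. real (a - k) * beta_mix M Z k))
              in \<sigma> * sqrt ((4 / real n) * L) + (1 / (3 * real m)) * L + real s / real n)}
         \<ge> 1 - \<delta>"
proof -
  note P = assms(1)
  have st: "stationary_process M Z" using assms(2) unfolding stationary_beta_mixing_def by blast
  have Zm[measurable]: "\<And>t. Z t \<in> borel_measurable M" using st stat_meas by blast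
  have clipm[measurable]: "clip \<in> borel_measurable borel" unfolding clip_def[abs_def] by measurable
  define Zc where "Zc = (\<lambda>t \<omega>. clip (Z t \<omega>))"
  have Zcm[measurable]: "\<And>t. Zc t \<in> borel_measurable M" unfolding Zc_def by measurable
  have stc: "stationary_process M Zc" unfolding Zc_def by (rule clip_stationary[OF st])
  have bc: "\<And>t \<omega>. 0 \<le> Zc t \<omega> \<and> Zc t \<omega> \<le> 1" unfolding Zc_def clip_def by auto
  have AEt: "AE \<omega> in M. Z t \<omega> = Zc t \<omega>" for t
    using AE_t[OF st assms(3), of t] by eventually_elim (auto simp: Zc_def clip_def)
  have AEall: "AE \<omega> in M. \<forall>t. Z t \<omega> = Zc t \<omega>"
    by (subst AE_all_countable) (use AEt in blast)
  have pm: "past_block Y \<in> measurable M seq_space" if "\<And>t. Y t \<in> borel_measurable M" for Y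
    using past_meas[where Z=Y, OF that] by blast
  have fm: "future_block Y k \<in> measurable M seq_space" if "\<And>t. Y t \<in> borel_measurable M" for Y k
    using future_meas[where Z=Y, OF that] by blast
  have bq: "beta_mix M Zc = beta_mix M Z"
  proof
    fix k
    have AEp: "AE \<omega> in M. past_block Zc \<omega> = past_block Z \<omega> \<and> future_block Zc k \<omega> = future_block Z k \<omega>"
      using AEall by eventually_elim (auto simp: past_block_def future_block_def)
    have pmc[measurable]: "past_block Zc \<in> measurable M seq_space" by (rule pm) simp
    have pmz[measurable]: "past_block Z \<in> measurable M seq_space" by (rule pm) simp
    have fmc[measurable]: "future_block Zc k \<in> measurable M seq_space" by (rule fm) simp
    have fmz[measurable]: "future_block Z k \<in> measurable M seq_space" by (rule fm) simp
    have d1: "distr M (seq_space \<Otimes>\<^sub>M seq_space) (\<lambda>\<omega>. (past_block Zc \<omega>, future_block Zc k \<omega>))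
        = distr M (seq_space \<Otimes>\<^sub>M seq_space) (\<lambda>\<omega>. (past_block Z \<omega>, future_block Z k \<omega>))"
      by (rule distr_cong_AE[OF refl refl]) (use AEp in \<open>auto elim: AE_mp\<close>)
    have d2: "distr M seq_space (past_block Zc) = distr M seq_space (past_block Z)"
      by (rule distr_cong_AE[OF refl refl]) (use AEp in \<open>auto elim: AE_mp\<close>)
    have d3: "distr M seq_space (future_block Zc k) = distr M seq_space (future_block Z k)"
      by (rule distr_cong_AE[OF refl refl]) (use AEp in \<open>auto elim: AE_mp\<close>)
    show "beta_mix M Zc k = beta_mix M Z k" unfolding beta_mix_def d1 d2 d3 ..
  qed
  have mq: "(LINT \<omega>'|M. Zc 1 \<omega>') = (LINT \<omega>'|M. Z 1 \<omega>')"
    by (rule integral_cong_AE) (use AEt[of 1] in \<open>auto elim: AE_mp\<close>)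
  have vq: "(LINT \<omega>|M. (Zc 1 \<omega> - (LINT \<omega>'|M. Zc 1 \<omega>'))\<^sup>2) = v"
    unfolding mq assms(4)[symmetric]
    by (rule integral_cong_AE) (use AEt[of 1] in \<open>auto elim: AE_mp\<close>)
  have dl': "\<delta> > 4 * (real m - 1) * beta_mix M Zc a" using assms(9) bq by simp
  have H: "measure M {\<omega> \<in> space M.
           \<bar>(LINT \<omega>'|M. Zc 1 \<omega>') - (1 / real n) * (\<Sum>i = 1..n. Zc (int i) \<omega>)\<bar>
           \<le> (let L = ln (4 / (\<delta> - 4 * (real m - 1) * beta_mix M Zc a));
                  \<sigma> = sqrt (v + (2 / real a) * (\<Sum>k = 1..a - 1. real (a - k) * beta_mix M Zc k))
              in \<sigma> * sqrt ((4 / real n) * L) + (1 / (3 * real m)) * L + real s / real n)}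
         \<ge> 1 - \<delta>"
    by (rule main_bounded[OF P stc bc vq assms(5-8) dl'])
  have meq: "measure M {\<omega> \<in> space M. \<bar>c0 - (1 / real n) * (\<Sum>i = 1..n. Zc (int i) \<omega>)\<bar> \<le> c}
      = measure M {\<omega> \<in> space M. \<bar>c0 - (1 / real n) * (\<Sum>i = 1..n. Z (int i) \<omega>)\<bar> \<le> c}" for c0 c
    by (rule measure_eq_AE) (use AEall in \<open>auto elim: AE_mp\<close>)
  show ?thesis using H unfolding bq mq meq .
qed

end
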